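(* (1) $M=\bigoplus_{d\in \mathbb{N}} G_d$, where $G_d$ is the set of permutations of $\mathcal{X}_d$ which commute with $\mathrm{Gal}(\mathbb{F}_{q^d}:\mathbb{F}_q)$. (2) $G_d\cong \mathbb{Z}/d\mathbb{Z} \wr \mathrm{Perm}(r_d)$, where $r_d$ is the number of orbits of size $d$ (i.e. $r_d=d^{-1}\#\mathcal{X}_d$). (3) Equivalently, $G_d\cong (\mathbb{Z}/d\mathbb{Z})^{r_d}\rtimes_h \mathrm{Perm}(r_d)$, where $h:\mathrm{Perm}(r_d)\to \mathrm{Aut}((\mathbb{Z}/d\mathbb{Z})^{r_d})$ is given by $h(\sigma)(a_1,\dots,a_{r_d})=(a_{(1)^\sigma},\dots,a_{(r_d)^\sigma})$.
   Context: $M$ denotes the set of permutations of $\overline{\mathbb{F}}_q^n$ induced by profinite polynomial endomorphisms over $\mathbb{F}_q$; equivalently, $M$ is the set of permutations of $\overline{\mathbb{F}}_q^n$ commuting with the coordinatewise action of $\mathrm{Gal}(\overline{\mathbb{F}}_q:\mathbb{F}_q)$. $\mathcal{X}_d$ is the union of all orbits of size $d$ of $\mathrm{Gal}(\overline{\mathbb{F}}_q:\mathbb{F}_q)$ acting on $\overline{\mathbb{F}}_q^n$. Permutations act on the right: $(x)^{\sigma\rho}=((x)^\sigma)^\rho$. *)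

theory Defs
  imports "HOL-Algebra.Algebraic_Closure_Type" "HOL-Algebra.Product_Groups"
    "HOL-Algebra.Elementary_Groups" "HOL-Algebra.Bij"
begin

text \<open>Setting: F_q is a finite field type 'q (q = CARD('q)); its algebraic
closure is the library type 'q alg_closure, with F_q embedded via to_ac.
Points of the affine n-space are maps 'n => 'q alg_closure, 'n a finite
index type with n = CARD('n).\<close>

definition Gal :: "('q::{finite,field} alg_closure \<Rightarrow> 'q alg_closure) set" where
  "Gal = {\<sigma>. bij \<sigma> \<and> (\<forall>x y. \<sigma> (x + y) = \<sigma> x + \<sigma> y)
              \<and> (\<forall>x y. \<sigma> (x * y) = \<sigma> x * \<sigma> y)
              \<and> (\<forall>a. \<sigma> (to_ac a) = to_ac a)}"

definition gal_orbit :: "('n \<Rightarrow> 'q::{finite,field} alg_closure) \<Rightarrow> ('n \<Rightarrow> 'q alg_closure) set" where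
  "gal_orbit x = (\<lambda>\<sigma>. \<sigma> \<circ> x) ` Gal"

definition Xset :: "nat \<Rightarrow> ('n::finite \<Rightarrow> 'q::{finite,field} alg_closure) set" where
  "Xset d = {x. finite (gal_orbit x) \<and> card (gal_orbit x) = d}"

definition r_num :: "('n::finite \<Rightarrow> 'q::{finite,field} alg_closure) itself \<Rightarrow> nat \<Rightarrow> nat" where
  "r_num T d = card (Xset d :: ('n \<Rightarrow> 'q alg_closure) set) div d"

text \<open>Permutation group of a set S, permutations acting on the right:
  the product f g means first f, then g.\<close>
definition RPerm :: "'a set \<Rightarrow> ('a \<Rightarrow> 'a) monoid" where
  "RPerm S = \<lparr>carrier = Bij S, monoid.mult = (\<lambda>f g. compose S g f), one = (\<lambda>x\<in>S. x)\<rparr>"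

definition M_group :: "(('n::finite \<Rightarrow> 'q::{finite,field} alg_closure) \<Rightarrow> ('n \<Rightarrow> 'q alg_closure)) monoid" where
  "M_group = \<lparr>carrier = {\<pi>. bij \<pi> \<and> (\<forall>\<sigma>\<in>Gal. \<forall>x. \<pi> (\<sigma> \<circ> x) = \<sigma> \<circ> \<pi> x)},
              monoid.mult = (\<lambda>f g. g \<circ> f), one = id\<rparr>"

definition G_group :: "nat \<Rightarrow> (('n::finite \<Rightarrow> 'q::{finite,field} alg_closure) \<Rightarrow> ('n \<Rightarrow> 'q alg_closure)) monoid" where
  "G_group d = (RPerm (Xset d))\<lparr>carrier :=
      {\<pi> \<in> Bij (Xset d). \<forall>\<sigma>\<in>Gal. \<forall>x\<in>Xset d. \<pi> (\<sigma> \<circ> x) = \<sigma> \<circ> \<pi> x}\<rparr>"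

definition semidirect_product ::
  "('a, 'x) monoid_scheme \<Rightarrow> ('b, 'y) monoid_scheme \<Rightarrow> ('b \<Rightarrow> 'a \<Rightarrow> 'a) \<Rightarrow> ('a \<times> 'b) monoid" where
  "semidirect_product N H \<phi> =
     \<lparr>carrier = carrier N \<times> carrier H,
      monoid.mult = (\<lambda>p q. (fst p \<otimes>\<^bsub>N\<^esub> \<phi> (snd p) (fst q), snd p \<otimes>\<^bsub>H\<^esub> snd q)),
      one = (\<one>\<^bsub>N\<^esub>, \<one>\<^bsub>H\<^esub>)\<rparr>"

definition cyc_power :: "nat \<Rightarrow> nat \<Rightarrow> (nat \<Rightarrow> int) monoid" where
  "cyc_power d r = product_group {1..r} (\<lambda>_. integer_mod_group d)"

definition coord_perm_action :: "nat \<Rightarrow> nat \<Rightarrow> (nat \<Rightarrow> nat) \<Rightarrow> (nat \<Rightarrow> int) \<Rightarrow> (nat \<Rightarrow> int)" where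
  "coord_perm_action d r \<sigma> = (\<lambda>a\<in>carrier (cyc_power d r). \<lambda>i\<in>{1..r}. a (\<sigma> i))"

definition wreath_cyc :: "nat \<Rightarrow> nat \<Rightarrow> ((nat \<Rightarrow> int) \<times> (nat \<Rightarrow> nat)) monoid" where
  "wreath_cyc d r = semidirect_product (cyc_power d r) (RPerm {1..r}) (coord_perm_action d r)"

end

theory Submission
  imports Defs
begin

lemma prime_CHAR_fin: "prime CHAR('q::{finite,field})"
  by (simp add: finite_imp_CHAR_pos prime_CHAR_semidom)

lemma of_nat_mod_CHAR: "(of_nat (n mod CHAR('a)) :: 'a::ring_1) = of_nat n"
proof -
  have "(of_nat n :: 'a) = of_nat (n div CHAR('a) * CHAR('a) + n mod CHAR('a))" by simp
  thus ?thesis by (simp only: of_nat_add of_nat_mult of_nat_CHAR) simp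
qed

lemma of_int_mod_CHAR: "(of_int (n mod int CHAR('a)) :: 'a::ring_1) = of_int n"
proof -
  have "(of_int n :: 'a) = of_int (n div int CHAR('a) * int CHAR('a) + n mod int CHAR('a))" by simp
  thus ?thesis by (simp only: of_int_add of_int_mult of_int_of_nat_eq of_nat_CHAR) simp
qed

lemma of_nat_mult_closed:
  fixes S :: "'a::comm_ring_1 set"
  assumes "0 \<in> S" "\<And>x y. x \<in> S \<Longrightarrow> y \<in> S \<Longrightarrow> x + y \<in> S" "v \<in> S"
  shows "of_nat n * v \<in> S"
  by (induction n) (auto simp: algebra_simps assms)

lemma step_card:
  fixes S :: "'q::{finite,field} set"
  assumes S0: "0 \<in> S" and Sadd: "\<And>x y. x \<in> S \<Longrightarrow> y \<in> S \<Longrightarrow> x + y \<in> S" and v: "v \<notin> S"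
  defines "T \<equiv> (\<lambda>(s,c). s + of_nat c * v) ` (S \<times> {..<CHAR('q)})"
  shows "card T = card S * CHAR('q)" "0 \<in> T" "\<And>x y. x \<in> T \<Longrightarrow> y \<in> T \<Longrightarrow> x + y \<in> T"
    "S \<subset> T"
proof -
  let ?p = "CHAR('q)"
  have pp: "prime ?p" by (rule prime_CHAR_fin)
  hence p1: "?p > 1" using prime_gt_1_nat by blast
  have neg: "-s \<in> S" if "s \<in> S" for s
  proof -
    have "of_nat (?p - 1) * s + s = of_nat (?p - 1 + 1) * s" by (simp add: distrib_right)
    also have "?p - 1 + 1 = ?p" using p1 by simp
    finally have "of_nat (?p - 1) * s = -s" by (simp add: eq_neg_iff_add_eq_0)
    thus ?thesis using of_nat_mult_closed[OF S0 Sadd that] by metis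
  qed
  have inj: "inj_on (\<lambda>(s,c). s + of_nat c * v) (S \<times> {..<?p})"
  proof (rule inj_onI, clarsimp)
    fix s c s' c' assume s: "s \<in> S" "s' \<in> S" and c: "c < ?p" "c' < ?p"
      and e: "s + of_nat c * v = s' + of_nat c' * v"
    show "s = s' \<and> c = c'"
    proof (cases "c = c'")
      case True thus ?thesis using e by simp
    next
      case False
      define t where "t = int c - int c'"
      have t0: "t \<noteq> 0" "\<bar>t\<bar> < int ?p" unfolding t_def using c False by auto
      have "\<not> int ?p dvd t" using dvd_imp_le_int[OF t0(1), of "int ?p"] t0(2) by auto
      hence cop: "coprime t (int ?p)"
        using pp by (metis coprime_commute prime_imp_coprime prime_nat_int_transfer)
      obtain j v' where j: "j * t + v' * int ?p = 1"
        using bezout_int[of t "int ?p"] cop by (auto simp: coprime_iff_gcd_eq_1)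
      have "(of_int (j * t + v' * int ?p) :: 'q) = 1" using j by simp
      hence j1: "of_int t * of_int j = (1::'q)" by (simp add: mult.commute)
      have "(s' - s) = of_int t * v" using e unfolding t_def by (simp add: algebra_simps)
      hence "v = of_int j * (s' - s)" using j1 by (metis mult.assoc mult.commute mult_1)
      moreover have "of_int j * (s' - s) \<in> S"
      proof -
        have "(of_int j :: 'q) = of_int (j mod int ?p)" by (simp add: of_int_mod_CHAR)
        also have "\<dots> = of_nat (nat (j mod int ?p))" using p1 by simp
        finally have "of_int j = (of_nat (nat (j mod int ?p)) :: 'q)" .
        moreover have "s' - s \<in> S" using Sadd[OF s(2) neg[OF s(1)]] by simp
        ultimately show ?thesis using of_nat_mult_closed[OF S0 Sadd] by metis
      qed
      ultimately show ?thesis using v by simp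
    qed
  qed
  show "card T = card S * ?p" unfolding T_def using card_image[OF inj] by (simp add: card_cartesian_product)
  show "0 \<in> T" unfolding T_def using S0 p1 by (force intro!: image_eqI[of _ _ "(0,0)"])
  show "S \<subset> T"
  proof
    show "S \<subseteq> T" unfolding T_def using p1 by (force intro: image_eqI[of _ _ "(_,0)"])
    have "v \<in> T" unfolding T_def using p1 S0 by (force intro!: image_eqI[of _ _ "(0,1)"])
    thus "S \<noteq> T" using v by blast
  qed
  fix x y assume "x \<in> T" "y \<in> T"
  then obtain s1 c1 s2 c2 where a: "s1 \<in> S" "s2 \<in> S" "x = s1 + of_nat c1 * v" "y = s2 + of_nat c2 * v"
    unfolding T_def by auto
  have "x + y = (s1 + s2) + of_nat ((c1 + c2) mod ?p) * v"
    using a by (simp add: algebra_simps of_nat_mod_CHAR)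
  thus "x + y \<in> T" unfolding T_def using a p1 Sadd by (force intro!: image_eqI[of _ _ "(s1+s2, (c1+c2) mod ?p)"])
qed

lemma card_prime_power_aux:
  fixes S :: "'q::{finite,field} set"
  assumes "card (UNIV - S) = n" "0 \<in> S" "\<And>x y. x \<in> S \<Longrightarrow> y \<in> S \<Longrightarrow> x + y \<in> S"
    "card S = CHAR('q) ^ f"
  shows "\<exists>f. card (UNIV :: 'q set) = CHAR('q) ^ f"
  using assms
proof (induction n arbitrary: S f rule: less_induct)
  case (less n)
  show ?case
  proof (cases "S = UNIV")
    case True thus ?thesis using less by metis
  next
    case False
    then obtain v where v: "v \<notin> S" by blast
    define T where "T \<equiv> (\<lambda>(s,c). s + of_nat c * v) ` (S \<times> {..<CHAR('q)})"
    note st = step_card[OF less(3) less(4) v, folded T_def]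
    have "UNIV - T \<subset> UNIV - S" using st(4) by blast
    hence "card (UNIV - T) < n" using less(2) by (metis finite psubset_card_mono)
    thus ?thesis using less(1)[OF _ refl st(2) st(3), of "Suc f"] st(1) less(5) by (simp add: mult.commute)
  qed
qed

lemma card_prime_power: "\<exists>f. card (UNIV :: 'q::{finite,field} set) = CHAR('q) ^ f"
  by (rule card_prime_power_aux[of "{0}" _ 0]) auto

lemma fermat_fin: "(a::'q::{finite,field}) ^ card (UNIV :: 'q set) = a"
proof (cases "a = 0")
  case False
  have "a * (\<Prod>y\<in>UNIV-{0}. a * y) = a * a ^ (card (UNIV :: 'q set) - 1) * \<Prod>(UNIV-{0})"
    by (simp add: prod.distrib mult_ac)
  also have "a * a ^ (card (UNIV :: 'q set) - 1) = a ^ Suc (card (UNIV :: 'q set) - 1)"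
    by (subst power_Suc) auto
  also have "Suc (card (UNIV :: 'q set) - 1) = card (UNIV :: 'q set)"
    using finite_UNIV_card_ge_0[where ?'a = 'q] by simp
  also have "(\<Prod>y\<in>UNIV-{0}. a * y) = (\<Prod>y\<in>UNIV-{0}. y)"
    by (rule prod.reindex_bij_witness[of _ "\<lambda>y. y / a" "\<lambda>y. a * y"]) (use False in auto)
  finally show ?thesis
    by simp
qed (use finite_UNIV_card_ge_0[where ?'a = 'q] in auto)

lemma fermat_fin_pow: "(a::'q::{finite,field}) ^ (card (UNIV :: 'q set) ^ k) = a"
  by (induction k) (simp_all add: power_mult fermat_fin)

definition Fr :: "nat \<Rightarrow> 'q::{finite,field} alg_closure \<Rightarrow> 'q alg_closure" where
  "Fr k y = y ^ (card (UNIV :: 'q set) ^ k)"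

lemma card_q_pos: "card (UNIV :: 'q::{finite,field} set) > 0"
  by (simp add: finite_UNIV_card_ge_0)

lemma Fr_add: "Fr k (x + y) = Fr k x + Fr k (y :: 'q::{finite,field} alg_closure)"
proof -
  obtain f where f: "card (UNIV :: 'q set) = CHAR('q) ^ f" using card_prime_power by blast
  have "card (UNIV :: 'q set) ^ k = CHAR('q alg_closure) ^ (f * k)"
    by (simp add: f power_mult)
  moreover have "prime CHAR('q alg_closure)" using prime_CHAR_fin[where 'q='q] by simp
  ultimately show ?thesis unfolding Fr_def by (rule freshmans_dream'[rotated])
qed

lemma Fr_mult: "Fr k (x * y) = Fr k x * Fr k (y::'q::{finite,field} alg_closure)"
  unfolding Fr_def by (simp add: power_mult_distrib)

lemma Fr_0 [simp]: "Fr k 0 = (0::'q::{finite,field} alg_closure)"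
  unfolding Fr_def using card_q_pos[where 'q='q] by simp

lemma Fr_1 [simp]: "Fr k 1 = (1::'q::{finite,field} alg_closure)"
  unfolding Fr_def by simp

lemma Fr_to_ac [simp]: "Fr k (to_ac a) = to_ac a"
  unfolding Fr_def by (simp flip: to_ac_power add: fermat_fin_pow)

lemma Fr_zero_idx [simp]: "Fr 0 y = (y::'q::{finite,field} alg_closure)"
  unfolding Fr_def by simp

lemma Fr_Fr: "Fr a (Fr b y) = Fr (a + b) (y::'q::{finite,field} alg_closure)"
  unfolding Fr_def by (simp add: power_add power_mult mult.commute flip: power_mult)

lemma Fr_power: "Fr k (y ^ n) = Fr k (y::'q::{finite,field} alg_closure) ^ n"
  unfolding Fr_def by (simp add: power_mult mult.commute flip: power_mult)

lemma Fr_minus: "Fr k (x - y) = Fr k x - Fr k (y::'q::{finite,field} alg_closure)"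
proof -
  have "Fr k x = Fr k (x - y) + Fr k y" by (metis Fr_add diff_add_cancel)
  thus ?thesis by simp
qed

lemma Fr_eq0: "Fr k x = 0 \<longleftrightarrow> x = (0::'q::{finite,field} alg_closure)"
  unfolding Fr_def using card_q_pos[where 'q='q] by simp

lemma Fr_inj: "inj (Fr k :: 'q::{finite,field} alg_closure \<Rightarrow> _)"
proof (rule injI)
  fix x y assume "Fr k x = Fr k y"
  hence "Fr k (x - y) = 0" by (simp add: Fr_minus)
  thus "x = y" by (simp add: Fr_eq0)
qed

lemma hom_poly:
  fixes \<sigma> :: "'a::comm_ring_1 \<Rightarrow> 'a"
  assumes add: "\<And>x y. \<sigma> (x + y) = \<sigma> x + \<sigma> y" and mult: "\<And>x y. \<sigma> (x * y) = \<sigma> x * \<sigma> y"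
  shows "\<sigma> (poly P x) = poly (map_poly \<sigma> P) (\<sigma> x)"
proof -
  have z: "\<sigma> 0 = 0" using add[of 0 0] by simp
  show ?thesis
  proof (induction P)
    case 0 thus ?case by (simp add: z)
  next
    case (pCons a p) thus ?case by (simp add: map_poly_pCons z add mult)
  qed
qed

lemma hom_poly_fix:
  fixes \<sigma> :: "'a::comm_ring_1 \<Rightarrow> 'a"
  assumes add: "\<And>x y. \<sigma> (x + y) = \<sigma> x + \<sigma> y" and mult: "\<And>x y. \<sigma> (x * y) = \<sigma> x * \<sigma> y"
    and fx: "\<And>i. \<sigma> (coeff P i) = coeff P i"
  shows "\<sigma> (poly P x) = poly P (\<sigma> x)"
proof -
  have z: "\<sigma> 0 = 0" using add[of 0 0] by simp
  have "map_poly \<sigma> P = P" by (rule poly_eqI) (simp add: coeff_map_poly z fx)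
  thus ?thesis using hom_poly[OF add mult] by metis
qed

lemma Fr_periodic: "\<exists>m>0. Fr m (y :: 'q::{finite,field} alg_closure) = y"
proof -
  obtain P :: "'q poly" where P: "P \<noteq> 0" "poly (map_poly to_ac P) y = 0"
    using alg_closure_algebraic by blast
  define Q where "Q = map_poly to_ac P"
  have Q0: "Q \<noteq> 0" unfolding Q_def using P(1) by (simp add: map_poly_eq_0_iff)
  have roots: "poly Q (Fr k y) = 0" for k
  proof -
    have "Fr k (poly Q y) = poly Q (Fr k y)"
      by (rule hom_poly_fix) (auto simp: Fr_add Fr_mult Q_def coeff_map_poly)
    thus ?thesis using P(2) Q_def by simp
  qed
  have "finite {x. poly Q x = 0}" using poly_roots_finite[OF Q0] .
  moreover have "range (\<lambda>k. Fr k y) \<subseteq> {x. poly Q x = 0}" using roots by auto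
  ultimately have "finite (range (\<lambda>k. Fr k y))" by (rule finite_subset[rotated])
  hence "\<not> inj (\<lambda>k. Fr k y)" using finite_imageD infinite_UNIV_nat by blast
  then obtain a b where ab: "a \<noteq> b" "Fr a y = Fr b y" unfolding inj_def by blast
  have *: "Fr (b - a) y = y" if "a < b" "Fr a y = Fr b y" for a b
  proof -
    have "Fr b y = Fr a (Fr (b - a) y)" using that by (simp add: Fr_Fr)
    thus ?thesis using that Fr_inj[of a] by (metis injD Fr_zero_idx Fr_Fr add_0)
  qed
  show ?thesis
  proof (cases "a < b")
    case True thus ?thesis using *[OF True ab(2)] by (intro exI[of _ "b - a"]) auto
  next
    case False hence "b < a" using ab(1) by simp
    thus ?thesis using *[OF \<open>b < a\<close> ab(2)[symmetric]] by (intro exI[of _ "a - b"]) auto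
  qed
qed

lemma Fr_mult_idx: "Fr m y = y \<Longrightarrow> Fr (m * j) y = (y::'q::{finite,field} alg_closure)"
proof (induction j)
  case (Suc j)
  have "Fr (m * Suc j) y = Fr m (Fr (m * j) y)" by (simp add: Fr_Fr)
  thus ?case using Suc by simp
qed simp

lemma Fr_surj: "surj (Fr k :: 'q::{finite,field} alg_closure \<Rightarrow> _)"
proof -
  have "y \<in> range (Fr k)" for y :: "'q alg_closure"
  proof -
    obtain m where m: "m > 0" "Fr m y = y" using Fr_periodic by blast
    have "Fr (m * k) y = y" by (rule Fr_mult_idx[OF m(2)])
    moreover have "m * k = k + (m * k - k)" using m(1) by (simp add: le_add_diff_inverse)
    ultimately have "Fr k (Fr (m * k - k) y) = y" by (metis Fr_Fr)
    thus ?thesis by (metis rangeI)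
  qed
  thus ?thesis by blast
qed

lemma Fr_bij: "bij (Fr k :: 'q::{finite,field} alg_closure \<Rightarrow> _)"
  using Fr_inj Fr_surj by (blast intro: bijI)

lemma Fr_Gal: "Fr k \<in> Gal"
  unfolding Gal_def using Fr_bij Fr_add Fr_mult Fr_to_ac by blast

lemma Gal_add: "\<sigma> \<in> Gal \<Longrightarrow> \<sigma> (x + y) = \<sigma> x + \<sigma> y" unfolding Gal_def by blast
lemma Gal_mult: "\<sigma> \<in> Gal \<Longrightarrow> \<sigma> (x * y) = \<sigma> x * \<sigma> y" unfolding Gal_def by blast
lemma Gal_to_ac: "\<sigma> \<in> Gal \<Longrightarrow> \<sigma> (to_ac a) = to_ac a" unfolding Gal_def by blast
lemma Gal_bij: "\<sigma> \<in> Gal \<Longrightarrow> bij \<sigma>" unfolding Gal_def by blast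
lemma Gal_0: "\<sigma> \<in> Gal \<Longrightarrow> \<sigma> 0 = 0" by (metis Gal_to_ac to_ac_0)
lemma Gal_1: "\<sigma> \<in> Gal \<Longrightarrow> \<sigma> 1 = 1" by (metis Gal_to_ac to_ac_1)
lemma Gal_power: "\<sigma> \<in> Gal \<Longrightarrow> \<sigma> (x ^ n) = \<sigma> x ^ n"
  by (induction n) (simp_all add: Gal_1 Gal_mult)

lemma Fr1_fixed: "Fr 1 (y :: 'q::{finite,field} alg_closure) = y \<Longrightarrow> y \<in> range to_ac"
proof -
  let ?q = "card (UNIV :: 'q set)"
  define Q :: "'q alg_closure poly" where "Q = monom 1 ?q + [:0, -1:]"
  have q2: "?q \<ge> 2"
  proof -
    have "card {0, 1::'q} \<le> ?q" by (rule card_mono) auto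
    thus ?thesis by simp
  qed
  have degQ: "degree Q = ?q" unfolding Q_def using q2 by (subst degree_add_eq_left) (auto simp: degree_monom_eq)
  hence Q0: "Q \<noteq> 0" using q2 by auto
  have rootsQ: "{x. poly Q x = 0} = {x. Fr 1 x = x}" unfolding Q_def Fr_def by (auto simp: poly_monom)
  have "card {x. Fr 1 x = (x::'q alg_closure)} \<le> ?q" using card_poly_roots_bound[OF Q0] degQ rootsQ by simp
  moreover have "range to_ac \<subseteq> {x. Fr 1 x = (x :: 'q alg_closure)}" by auto
  moreover have "card (range (to_ac :: 'q \<Rightarrow> _)) = ?q" using inj_to_ac card_image by blast
  moreover have "finite {x. Fr 1 x = (x :: 'q alg_closure)}" using poly_roots_finite[OF Q0] rootsQ by simp
  ultimately have "range to_ac = {x. Fr 1 x = (x :: 'q alg_closure)}" by (metis card_seteq)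
  thus "Fr 1 y = y \<Longrightarrow> y \<in> range to_ac" by blast
qed

lemma hom_sum:
  fixes \<sigma> :: "'a::comm_ring_1 \<Rightarrow> 'a"
  assumes add: "\<And>x y. \<sigma> (x + y) = \<sigma> x + \<sigma> y"
  shows "\<sigma> (sum f A) = (\<Sum>i\<in>A. \<sigma> (f i))"
proof -
  have z: "\<sigma> 0 = 0" using add[of 0 0] by simp
  show ?thesis by (induction A rule: infinite_finite_induct) (simp_all add: z add)
qed

lemma hom_map_poly_mult:
  fixes \<sigma> :: "'a::comm_ring_1 \<Rightarrow> 'a"
  assumes add: "\<And>x y. \<sigma> (x + y) = \<sigma> x + \<sigma> y" and mult: "\<And>x y. \<sigma> (x * y) = \<sigma> x * \<sigma> y"
  shows "map_poly \<sigma> (p * q) = map_poly \<sigma> p * map_poly \<sigma> q"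
proof -
  have z: "\<sigma> 0 = 0" using add[of 0 0] by simp
  show ?thesis by (rule poly_eqI) (simp add: coeff_map_poly z coeff_mult hom_sum[OF add] mult)
qed

lemma hom_map_poly_prod:
  fixes \<sigma> :: "'a::comm_ring_1 \<Rightarrow> 'a"
  assumes add: "\<And>x y. \<sigma> (x + y) = \<sigma> x + \<sigma> y" and mult: "\<And>x y. \<sigma> (x * y) = \<sigma> x * \<sigma> y"
    and one: "\<sigma> 1 = 1"
  shows "map_poly \<sigma> (\<Prod>i\<in>A. g i) = (\<Prod>i\<in>A. map_poly \<sigma> (g i))"
proof (induction A rule: infinite_finite_induct)
  case (infinite A) thus ?case by (simp add: one)
next
  case empty thus ?case by (simp add: one)
next
  case (insert x F) thus ?case by (simp add: hom_map_poly_mult[OF add mult])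
qed

lemma Fr_inverse: "Fr k (inverse y) = inverse (Fr k (y::'q::{finite,field} alg_closure))"
  unfolding Fr_def by (simp add: power_inverse)

lemma Fr_uminus: "Fr k (- y) = - Fr k (y::'q::{finite,field} alg_closure)"
  by (metis Fr_minus Fr_0 diff_0)

lemma Km_finite:
  assumes "m > 0"
  shows "finite {y. Fr m y = (y::'q::{finite,field} alg_closure)}"
proof -
  let ?N = "card (UNIV :: 'q set) ^ m"
  have q2: "card (UNIV :: 'q set) \<ge> 2"
  proof -
    have "card {0, 1::'q} \<le> card (UNIV :: 'q set)" by (rule card_mono) auto
    thus ?thesis by simp
  qed
  have "card (UNIV :: 'q set) ^ 1 \<le> ?N" by (rule power_increasing) (use assms q2 in auto)
  hence N2: "?N \<ge> 2" using q2 by simp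
  define Q :: "'q alg_closure poly" where "Q = monom 1 ?N + [:0, -1:]"
  have "degree Q = ?N" unfolding Q_def using N2 by (subst degree_add_eq_left) (auto simp: degree_monom_eq)
  hence Q0: "Q \<noteq> 0" using N2 by auto
  have "{x. poly Q x = 0} = {x. Fr m x = x}" unfolding Q_def Fr_def by (auto simp: poly_monom)
  thus ?thesis using poly_roots_finite[OF Q0] by simp
qed

abbreviation RA :: "'q::{finite,field} alg_closure ring" where
  "RA \<equiv> ring_of_type_algebra"

lemma RA_simps:
  "carrier (RA\<lparr>carrier := K\<rparr>) = K" "(\<otimes>\<^bsub>RA\<lparr>carrier := K\<rparr>\<^esub>) = (*)" "\<one>\<^bsub>RA\<lparr>carrier := K\<rparr>\<^esub> = 1"
  "\<zero>\<^bsub>RA\<lparr>carrier := K\<rparr>\<^esub> = 0" "(\<oplus>\<^bsub>RA\<lparr>carrier := K\<rparr>\<^esub>) = (+)"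
  "carrier RA = UNIV" "(\<otimes>\<^bsub>RA\<^esub>) = (*)" "\<one>\<^bsub>RA\<^esub> = 1" "\<zero>\<^bsub>RA\<^esub> = 0" "(\<oplus>\<^bsub>RA\<^esub>) = (+)"
  by (simp_all add: ring_of_type_algebra_def)

lemma RA_pow: "x [^]\<^bsub>RA\<lparr>carrier := K\<rparr>\<^esub> (n::nat) = x ^ n"
  by (induction n) (simp_all add: RA_simps mult.commute)

lemma RA_field: "field RA" by (rule field_from_type_algebra)

lemma RA_minus: "\<ominus>\<^bsub>RA\<^esub> x = - x"
proof -
  interpret field RA by (rule RA_field)
  show ?thesis by (rule minus_equality) (simp_all add: RA_simps)
qed

lemma RA_inv: "x \<noteq> 0 \<Longrightarrow> inv\<^bsub>RA\<^esub> x = inverse x"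
proof -
  interpret field RA by (rule RA_field)
  assume "x \<noteq> 0"
  thus ?thesis by (intro comm_inv_char) (simp_all add: RA_simps)
qed

lemma Km_generator:
  assumes "m > 0"
  shows "\<exists>g::'q::{finite,field} alg_closure. g \<noteq> 0 \<and> Fr m g = g \<and> (\<forall>y. Fr m y = y \<and> y \<noteq> 0 \<longrightarrow> (\<exists>i. y = g ^ i))"
proof -
  define K where "K = {y. Fr m y = (y::'q alg_closure)}"
  interpret F: field RA by (rule RA_field)
  have sr: "subring K RA"
    by (rule F.subringI) (auto simp: K_def RA_simps RA_minus Fr_uminus Fr_mult Fr_add)
  have "subfield K RA"
    by (rule F.subfieldI'[OF sr]) (auto simp: K_def RA_inv Fr_inverse RA_simps)
  hence fK: "field (RA\<lparr>carrier := K\<rparr>)" by (rule F.subfield_iff(2))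
  have finK: "finite K" unfolding K_def by (rule Km_finite[OF assms])
  obtain a where a: "a \<in> carrier (mult_of (RA\<lparr>carrier := K\<rparr>))"
    "carrier (mult_of (RA\<lparr>carrier := K\<rparr>)) = {a [^]\<^bsub>RA\<lparr>carrier := K\<rparr>\<^esub> i | i::nat. i \<in> UNIV}"
    using field.finite_field_mult_group_has_gen[OF fK] finK by (auto simp: RA_simps)
  have "K - {0} = {a ^ i | i. True}" using a(2) by (simp add: RA_simps RA_pow)
  moreover have "a \<in> K - {0}" using a(1) by (simp add: RA_simps)
  ultimately have "a \<noteq> 0" "Fr m a = a" "\<forall>y. Fr m y = y \<and> y \<noteq> 0 \<longrightarrow> (\<exists>i. y = a ^ i)"
    unfolding K_def by blast+
  thus ?thesis by blast
qed

lemma Gal_on_Km: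
  assumes \<sigma>: "\<sigma> \<in> (Gal :: ('q::{finite,field} alg_closure \<Rightarrow> _) set)" and m: "m > 0"
  shows "\<exists>k. \<forall>y. Fr m y = y \<longrightarrow> \<sigma> y = Fr k y"
proof -
  obtain g :: "'q alg_closure" where g: "g \<noteq> 0" "Fr m g = g" "\<And>y. Fr m y = y \<Longrightarrow> y \<noteq> 0 \<Longrightarrow> \<exists>i. y = g ^ i"
    using Km_generator[OF m] by blast
  define C where "C = (\<lambda>i. Fr i g) ` {..<m}"
  have finC: "finite C" unfolding C_def by simp
  have gC: "g \<in> C" unfolding C_def using m by (force intro: image_eqI[of _ _ 0])
  have FrC: "Fr 1 ` C = C"
  proof
    show "Fr 1 ` C \<subseteq> C"
    proof
      fix z assume "z \<in> Fr 1 ` C"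
      then obtain i where i: "i < m" "z = Fr (1 + i) g" unfolding C_def by (auto simp: Fr_Fr)
      show "z \<in> C"
      proof (cases "1 + i = m")
        case True thus ?thesis using i g(2) gC by simp
      next
        case False thus ?thesis using i unfolding C_def by auto
      qed
    qed
    show "C \<subseteq> Fr 1 ` C"
    proof
      fix z assume "z \<in> C"
      then obtain i where i: "i < m" "z = Fr i g" unfolding C_def by auto
      show "z \<in> Fr 1 ` C"
      proof (cases i)
        case 0
        have "Fr 1 (Fr (m - 1) g) = z" using i 0 g(2) m by (simp add: Fr_Fr)
        moreover have "Fr (m - 1) g \<in> C" unfolding C_def using m by auto
        ultimately show ?thesis by blast
      next
        case (Suc j)
        have "Fr 1 (Fr j g) = z" using i Suc by (simp add: Fr_Fr)
        moreover have "Fr j g \<in> C" unfolding C_def using i Suc by auto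
        ultimately show ?thesis by blast
      qed
    qed
  qed
  define f where "f = (\<Prod>c\<in>C. [:- c, 1:])"
  have "map_poly (Fr 1) f = (\<Prod>c\<in>C. map_poly (Fr 1) [:- c, 1:])"
    unfolding f_def by (rule hom_map_poly_prod) (simp_all add: Fr_add Fr_mult)
  also have "\<dots> = (\<Prod>c\<in>C. [:- Fr 1 c, 1:])" by (simp add: map_poly_pCons Fr_uminus)
  also have "\<dots> = (\<Prod>c\<in>Fr 1 ` C. [:- c, 1:])"
    by (subst prod.reindex) (auto intro: inj_on_subset[OF Fr_inj])
  also have "\<dots> = f" unfolding f_def FrC ..
  finally have mf: "map_poly (Fr 1) f = f" .
  have coeffs: "\<sigma> (coeff f i) = coeff f i" for i
  proof -
    have "Fr 1 (coeff f i) = coeff f i" using mf by (metis coeff_map_poly Fr_0)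
    then obtain a where "coeff f i = to_ac a" using Fr1_fixed by blast
    thus ?thesis using Gal_to_ac[OF \<sigma>] by simp
  qed
  have "poly f g = 0" unfolding f_def using gC finC by (simp add: poly_prod prod_zero_iff)
  hence "poly f (\<sigma> g) = 0"
    using hom_poly_fix[of \<sigma> f g] Gal_add[OF \<sigma>] Gal_mult[OF \<sigma>] coeffs Gal_0[OF \<sigma>] by simp
  hence "\<sigma> g \<in> C" unfolding f_def using finC by (simp add: poly_prod prod_zero_iff)
  then obtain k where k: "\<sigma> g = Fr k g" unfolding C_def by auto
  show ?thesis
  proof (intro exI allI impI)
    fix y :: "'q alg_closure" assume y: "Fr m y = y"
    show "\<sigma> y = Fr k y"
    proof (cases "y = 0")
      case True thus ?thesis using Gal_0[OF \<sigma>] by simp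
    next
      case False
      then obtain i where "y = g ^ i" using g(3)[OF y] by blast
      thus ?thesis using k by (simp add: Gal_power[OF \<sigma>] Fr_power)
    qed
  qed
qed

type_synonym ('n,'q) pt = "'n \<Rightarrow> 'q alg_closure"

lemma FrV_Fr: "Fr a \<circ> (Fr b \<circ> x) = Fr (a + b) \<circ> (x :: 'n \<Rightarrow> 'q::{finite,field} alg_closure)"
  by (auto simp: Fr_Fr)

lemma FrV_inj: "Fr k \<circ> x = Fr k \<circ> y \<Longrightarrow> x = (y :: 'n \<Rightarrow> 'q::{finite,field} alg_closure)"
  using Fr_inj[of k] by (auto simp: fun_eq_iff inj_def)

lemma FrV_mult_idx: "Fr m \<circ> x = x \<Longrightarrow> Fr (m * j) \<circ> x = (x :: 'n \<Rightarrow> 'q::{finite,field} alg_closure)"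
  using Fr_mult_idx[of m] by (auto simp: fun_eq_iff)

lemma FrV_periodic: "\<exists>m>0. Fr m \<circ> x = (x :: 'n::finite \<Rightarrow> 'q::{finite,field} alg_closure)"
proof -
  have "\<forall>i. \<exists>m. m > 0 \<and> Fr m (x i) = x i" using Fr_periodic by blast
  then obtain M where M: "\<And>i. M i > 0" "\<And>i. Fr (M i) (x i) = x i" by metis
  define m where "m = (\<Prod>i\<in>UNIV. M i)"
  have "m > 0" unfolding m_def using M(1) by (simp add: prod_pos)
  moreover have "Fr m (x i) = x i" for i
  proof -
    have "M i dvd m" unfolding m_def by (rule dvd_prodI) auto
    then obtain j where "m = M i * j" by blast
    thus ?thesis using Fr_mult_idx[OF M(2)] by simp
  qed
  ultimately show ?thesis by (auto simp: fun_eq_iff)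
qed

definition per :: "('n::finite \<Rightarrow> 'q::{finite,field} alg_closure) \<Rightarrow> nat" where
  "per x = (LEAST m. m > 0 \<and> Fr m \<circ> x = x)"

lemma per: "per x > 0" "Fr (per x) \<circ> x = x"
  using LeastI_ex[OF FrV_periodic[of x]] unfolding per_def by auto

lemma per_min: "0 < m \<Longrightarrow> m < per x \<Longrightarrow> Fr m \<circ> x \<noteq> x"
  unfolding per_def using not_less_Least by blast

lemma FrV_mod: "Fr k \<circ> x = Fr (k mod per x) \<circ> x"
proof -
  have "Fr k \<circ> x = Fr (k mod per x) \<circ> (Fr (per x * (k div per x)) \<circ> x)"
    by (simp add: FrV_Fr)
  moreover have "Fr (per x * (k div per x)) \<circ> x = x" by (rule FrV_mult_idx[OF per(2)[of x]])
  ultimately show ?thesis by simp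
qed

lemma FrV_inj_per: "a < per x \<Longrightarrow> b < per x \<Longrightarrow> Fr a \<circ> x = Fr b \<circ> x \<Longrightarrow> a = b"
proof (rule ccontr)
  have *: "False" if "a < b" "b < per x" "Fr a \<circ> x = Fr b \<circ> x" for a b
  proof -
    have "Fr a \<circ> x = Fr a \<circ> (Fr (b - a) \<circ> x)" using that by (simp add: FrV_Fr)
    hence "Fr (b - a) \<circ> x = x" by (metis FrV_inj)
    thus False using per_min[of "b - a" x] that by auto
  qed
  assume "a < per x" "b < per x" "Fr a \<circ> x = Fr b \<circ> x" "a \<noteq> b"
  thus False using * by (metis linorder_neqE_nat)
qed

lemma Gal_vec:
  assumes "\<sigma> \<in> (Gal :: ('q::{finite,field} alg_closure \<Rightarrow> _) set)" "m > 0"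
  shows "\<exists>k. \<forall>x::'n \<Rightarrow> 'q alg_closure. Fr m \<circ> x = x \<longrightarrow> \<sigma> \<circ> x = Fr k \<circ> x"
proof -
  obtain k where k: "\<And>y. Fr m y = y \<Longrightarrow> \<sigma> y = Fr k y" using Gal_on_Km[OF assms] by blast
  show ?thesis by (rule exI[of _ k]) (auto simp: fun_eq_iff k)
qed

lemma gal_orbit_eq: "gal_orbit x = (\<lambda>k. Fr k \<circ> x) ` {..<per x}"
proof
  show "gal_orbit x \<subseteq> (\<lambda>k. Fr k \<circ> x) ` {..<per x}"
  proof
    fix y assume "y \<in> gal_orbit x"
    then obtain \<sigma> where \<sigma>: "\<sigma> \<in> Gal" "y = \<sigma> \<circ> x" unfolding gal_orbit_def by auto
    obtain k where "\<And>z::'a \<Rightarrow> 'b alg_closure. Fr (per x) \<circ> z = z \<Longrightarrow> \<sigma> \<circ> z = Fr k \<circ> z"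
      using Gal_vec[OF \<sigma>(1) per(1)] by blast
    hence "y = Fr k \<circ> x" using \<sigma>(2) per(2)[of x] by simp
    hence "y = Fr (k mod per x) \<circ> x" using FrV_mod by simp
    thus "y \<in> (\<lambda>k. Fr k \<circ> x) ` {..<per x}" using per(1)[of x] by auto
  qed
  show "(\<lambda>k. Fr k \<circ> x) ` {..<per x} \<subseteq> gal_orbit x"
    unfolding gal_orbit_def using Fr_Gal by blast
qed

lemma card_gal_orbit: "finite (gal_orbit x)" "card (gal_orbit x) = per x"
proof -
  have "inj_on (\<lambda>k. Fr k \<circ> x) {..<per x}" by (rule inj_onI) (auto intro: FrV_inj_per)
  thus "card (gal_orbit x) = per x" unfolding gal_orbit_eq by (simp add: card_image)
  show "finite (gal_orbit x)" unfolding gal_orbit_eq by simp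
qed

lemma Xset_per: "x \<in> Xset d \<longleftrightarrow> per x = d"
  unfolding Xset_def using card_gal_orbit by auto

lemma per_FrV: "per (Fr k \<circ> x) = per x"
proof -
  have *: "Fr j \<circ> (Fr k \<circ> x) = Fr k \<circ> x \<longleftrightarrow> Fr j \<circ> x = x" for j
  proof -
    have "Fr j \<circ> (Fr k \<circ> x) = Fr k \<circ> (Fr j \<circ> x)" by (simp add: FrV_Fr add.commute)
    thus ?thesis using FrV_inj[of k] by metis
  qed
  show ?thesis unfolding per_def * ..
qed

lemma per_Gal:
  assumes "\<sigma> \<in> (Gal :: ('q::{finite,field} alg_closure \<Rightarrow> _) set)"
  shows "per (\<sigma> \<circ> (x :: 'n::finite \<Rightarrow> 'q alg_closure)) = per x"
proof -
  obtain k where "\<And>z::'n \<Rightarrow> 'q alg_closure. Fr (per x) \<circ> z = z \<Longrightarrow> \<sigma> \<circ> z = Fr k \<circ> z"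
    using Gal_vec[OF assms per(1)] by blast
  hence "\<sigma> \<circ> x = Fr k \<circ> x" using per(2)[of x] by simp
  thus ?thesis by (simp add: per_FrV)
qed

lemma Xset_Fr: "x \<in> Xset d \<Longrightarrow> Fr k \<circ> x \<in> Xset d"
  by (simp add: Xset_per per_FrV)

lemma Xset_Gal: "\<sigma> \<in> Gal \<Longrightarrow> x \<in> Xset d \<Longrightarrow> \<sigma> \<circ> x \<in> Xset d"
  by (simp add: Xset_per per_Gal)

lemma Xset_0: "Xset 0 = ({} :: ('n::finite \<Rightarrow> 'q::{finite,field} alg_closure) set)"
proof (rule equals0I)
  fix x :: "'n \<Rightarrow> 'q alg_closure" assume "x \<in> Xset 0"
  hence "per x = 0" by (simp add: Xset_per)
  with per(1)[of x] show False by simp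
qed

lemma Xset_finite: "finite (Xset d :: ('n::finite \<Rightarrow> 'q::{finite,field} alg_closure) set)"
proof (cases "d = 0")
  case True thus ?thesis by (simp add: Xset_0)
next
  case False
  let ?K = "{y. Fr d y = (y::'q alg_closure)}"
  have "Xset d \<subseteq> {x::'n \<Rightarrow> 'q alg_closure. \<forall>i. x i \<in> ?K}"
    using per(2) by (fastforce simp: Xset_per fun_eq_iff)
  moreover have "finite {x::'n \<Rightarrow> 'q alg_closure. \<forall>i. x i \<in> ?K}"
  proof -
    have "{x::'n \<Rightarrow> 'q alg_closure. \<forall>i. x i \<in> ?K} = PiE UNIV (\<lambda>_. ?K)"
      by (auto simp: PiE_UNIV_domain Pi_iff)
    moreover have "finite (PiE (UNIV::'n set) (\<lambda>_. ?K))"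
      by (rule finite_PiE) (use Km_finite[of d] False in auto)
    ultimately show ?thesis by simp
  qed
  ultimately show ?thesis by (rule finite_subset)
qed

lemma G_group_simps:
  "carrier (G_group d) = {\<pi> \<in> Bij (Xset d). \<forall>\<sigma>\<in>Gal. \<forall>x\<in>Xset d. \<pi> (\<sigma> \<circ> x) = \<sigma> \<circ> \<pi> x}"
  "monoid.mult (G_group d) = (\<lambda>f g. compose (Xset d) g f)"
  "one (G_group d) = (\<lambda>x\<in>Xset d. x)"
  by (simp_all add: G_group_def RPerm_def)

lemma Bij_mem: "\<pi> \<in> Bij S \<Longrightarrow> x \<in> S \<Longrightarrow> \<pi> x \<in> S"
  by (auto simp: Bij_def bij_betw_def)

lemma G_char:
  assumes "d > 0"
  shows "\<pi> \<in> carrier (G_group d) \<longleftrightarrow>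
     \<pi> \<in> Bij (Xset d) \<and> (\<forall>x\<in>Xset d. \<pi> (Fr 1 \<circ> x) = Fr 1 \<circ> \<pi> (x :: 'n::finite \<Rightarrow> 'q::{finite,field} alg_closure))"
proof
  assume "\<pi> \<in> carrier (G_group d)"
  thus "\<pi> \<in> Bij (Xset d) \<and> (\<forall>x\<in>Xset d. \<pi> (Fr 1 \<circ> x) = Fr 1 \<circ> \<pi> x)"
    using Fr_Gal by (auto simp: G_group_simps)
next
  assume a: "\<pi> \<in> Bij (Xset d) \<and> (\<forall>x\<in>Xset d. \<pi> (Fr 1 \<circ> x) = Fr 1 \<circ> \<pi> x)"
  have it: "\<pi> (Fr k \<circ> x) = Fr k \<circ> \<pi> x" if "x \<in> Xset d" for k x
  proof (induction k)
    case 0 thus ?case by (simp add: comp_def)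
  next
    case (Suc k)
    have "\<pi> (Fr (Suc k) \<circ> x) = \<pi> (Fr 1 \<circ> (Fr k \<circ> x))" by (simp add: FrV_Fr)
    also have "\<dots> = Fr 1 \<circ> \<pi> (Fr k \<circ> x)" using a Xset_Fr[OF that, of k] by (simp only: Ball_def)
    also have "\<dots> = Fr (Suc k) \<circ> \<pi> x" by (simp only: Suc.IH FrV_Fr, simp)
    finally show ?case .
  qed
  show "\<pi> \<in> carrier (G_group d)"
    unfolding G_group_simps
  proof (intro CollectI conjI ballI)
    show "\<pi> \<in> Bij (Xset d)" using a by (rule conjunct1)
    fix \<sigma> :: "'q alg_closure \<Rightarrow> _" and x :: "'n \<Rightarrow> 'q alg_closure" assume \<sigma>: "\<sigma> \<in> Gal" and x: "x \<in> Xset d"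
    obtain k where k: "\<forall>z::'n \<Rightarrow> 'q alg_closure. Fr d \<circ> z = z \<longrightarrow> \<sigma> \<circ> z = Fr k \<circ> z"
      using Gal_vec[OF \<sigma> assms] by (elim exE)
    have px: "\<pi> x \<in> Xset d" using Bij_mem[OF conjunct1[OF a] x] .
    have x1: "Fr d \<circ> x = x" using x per(2)[of x] by (simp add: Xset_per)
    have x2: "Fr d \<circ> \<pi> x = \<pi> x" using px per(2)[of "\<pi> x"] by (simp add: Xset_per)
    have "\<pi> (\<sigma> \<circ> x) = \<pi> (Fr k \<circ> x)" using k x1 by simp
    also have "\<dots> = Fr k \<circ> \<pi> x" by (rule it[OF x])
    also have "\<dots> = \<sigma> \<circ> \<pi> x" using k x2 by simp
    finally show "\<pi> (\<sigma> \<circ> x) = \<sigma> \<circ> \<pi> x" .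
  qed
qed

lemma M_simps:
  "carrier M_group = {\<pi>. bij \<pi> \<and> (\<forall>\<sigma>\<in>Gal. \<forall>x. \<pi> (\<sigma> \<circ> x) = \<sigma> \<circ> \<pi> x)}"
  "monoid.mult M_group = (\<lambda>f g. g \<circ> f)"
  by (simp_all add: M_group_def)

lemma per_M:
  assumes "\<pi> \<in> carrier (M_group :: (('n::finite \<Rightarrow> 'q::{finite,field} alg_closure) \<Rightarrow> _) monoid)"
  shows "per (\<pi> x) = per x"
proof -
  have all: "\<forall>\<sigma>\<in>Gal. \<forall>x. \<pi> (\<sigma> \<circ> x) = \<sigma> \<circ> \<pi> x" using assms by (simp add: M_simps)
  have c: "\<pi> (Fr j \<circ> x) = Fr j \<circ> \<pi> x" for j using bspec[OF all Fr_Gal[of j]] by simp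
  have i: "inj \<pi>" using assms by (simp add: M_simps bij_is_inj)
  have *: "Fr j \<circ> \<pi> x = \<pi> x \<longleftrightarrow> Fr j \<circ> x = x" for j
    using c[of j] i by (metis injD)
  show ?thesis unfolding per_def * ..
qed

lemma restrict_G:
  assumes \<pi>: "\<pi> \<in> carrier (M_group :: (('n::finite \<Rightarrow> 'q::{finite,field} alg_closure) \<Rightarrow> _) monoid)"
  shows "restrict \<pi> (Xset d) \<in> carrier (G_group d)"
proof -
  have bij: "bij \<pi>" and c: "\<And>\<sigma> x. \<sigma> \<in> Gal \<Longrightarrow> \<pi> (\<sigma> \<circ> x) = \<sigma> \<circ> \<pi> x" using \<pi> by (auto simp: M_simps)
  have img: "\<pi> ` Xset d = Xset d"
  proof
    show "\<pi> ` Xset d \<subseteq> Xset d" using per_M[OF \<pi>] by (auto simp: Xset_per)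
    show "Xset d \<subseteq> \<pi> ` Xset d"
    proof
      fix y :: "'n \<Rightarrow> 'q alg_closure" assume y: "y \<in> Xset d"
      obtain x where x: "y = \<pi> x" using bij by (metis bij_pointE)
      have "x \<in> Xset d" using y x per_M[OF \<pi>, of x] by (simp add: Xset_per)
      thus "y \<in> \<pi> ` Xset d" using x by blast
    qed
  qed
  have "inj_on \<pi> (Xset d)" using bij_is_inj[OF bij] by (rule inj_on_subset) simp
  hence "bij_betw \<pi> (Xset d) (Xset d)" using img by (simp add: bij_betw_def)
  hence "restrict \<pi> (Xset d) \<in> Bij (Xset d)" by (simp add: Bij_def bij_betw_restrict_eq)
  moreover have "\<forall>\<sigma>\<in>Gal. \<forall>x\<in>Xset d. restrict \<pi> (Xset d) (\<sigma> \<circ> x) = \<sigma> \<circ> restrict \<pi> (Xset d) x"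
  proof (intro ballI)
    fix \<sigma> :: "'q alg_closure \<Rightarrow> _" and x :: "'n \<Rightarrow> 'q alg_closure" assume s: "\<sigma> \<in> Gal" and x: "x \<in> Xset d"
    have "\<sigma> \<circ> x \<in> Xset d" using s x by (rule Xset_Gal)
    thus "restrict \<pi> (Xset d) (\<sigma> \<circ> x) = \<sigma> \<circ> restrict \<pi> (Xset d) x" using c[OF s] x by simp
  qed
  ultimately show ?thesis by (simp add: G_group_simps)
qed

lemma part1:
  "(\<lambda>\<pi>. \<lambda>d\<in>{1::nat..}. restrict \<pi> (Xset d))
      \<in> iso (M_group :: (('n::finite \<Rightarrow> 'q::{finite,field} alg_closure) \<Rightarrow> _) monoid) (product_group {1..} G_group)"
proof -
  let ?\<Psi> = "\<lambda>\<pi>::('n \<Rightarrow> 'q alg_closure) \<Rightarrow> ('n \<Rightarrow> 'q alg_closure). \<lambda>d\<in>{1::nat..}. restrict \<pi> (Xset d)"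
  have inC: "?\<Psi> \<pi> \<in> carrier (product_group {1..} G_group)" if "\<pi> \<in> carrier M_group" for \<pi>
    using restrict_G[OF that] by (simp add: PiE_iff)
  have hom: "?\<Psi> \<in> hom M_group (product_group {1..} G_group)"
  proof (rule homI)
    fix \<pi>1 \<pi>2 :: "('n \<Rightarrow> 'q alg_closure) \<Rightarrow> ('n \<Rightarrow> 'q alg_closure)" assume p: "\<pi>1 \<in> carrier (M_group :: (('n \<Rightarrow> 'q alg_closure) \<Rightarrow> _) monoid)" "\<pi>2 \<in> carrier M_group"
    have "restrict (\<pi>2 \<circ> \<pi>1) (Xset d) = compose (Xset d) (restrict \<pi>2 (Xset d)) (restrict \<pi>1 (Xset d))" for d
    proof -
      have "\<pi>1 x \<in> Xset d" if "x \<in> Xset d" for x using that per_M[OF p(1)] by (simp add: Xset_per)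
      thus ?thesis by (auto simp: compose_def fun_eq_iff)
    qed
    thus "?\<Psi> (\<pi>1 \<otimes>\<^bsub>M_group\<^esub> \<pi>2) = ?\<Psi> \<pi>1 \<otimes>\<^bsub>product_group {1..} G_group\<^esub> ?\<Psi> \<pi>2"
      by (simp add: M_simps product_group_def G_group_simps fun_eq_iff)
  qed (rule inC)
  have inj: "inj_on ?\<Psi> (carrier M_group)"
  proof (rule inj_onI)
    fix \<pi> \<pi>' assume e: "?\<Psi> \<pi> = ?\<Psi> \<pi>'"
    show "\<pi> = \<pi>'"
    proof
      fix x :: "'n \<Rightarrow> 'q alg_closure"
      have "per x \<in> {1..}" using per(1)[of x] by simp
      hence "restrict \<pi> (Xset (per x)) x = restrict \<pi>' (Xset (per x)) x" using e by (metis restrict_apply')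
      thus "\<pi> x = \<pi>' x" by (simp add: Xset_per)
    qed
  qed
  have surj: "carrier (product_group {1..} G_group) \<subseteq> ?\<Psi> ` carrier M_group"
  proof
    fix F assume F: "F \<in> carrier (product_group {1..} (G_group :: nat \<Rightarrow> (('n \<Rightarrow> 'q alg_closure) \<Rightarrow> _) monoid))"
    have FG: "F d \<in> carrier (G_group d)" if "d \<ge> 1" for d using F that by (auto simp: PiE_iff)
    have Fext: "F d = undefined" if "d < 1" for d
    proof -
      have "F \<in> extensional {1..}" using F by (simp add: PiE_iff)
      moreover have "d \<notin> {1..}" using that by simp
      ultimately show ?thesis by (simp add: extensional_def)
    qed
    have FB: "F d \<in> Bij (Xset d)" if "d \<ge> 1" for d using FG[OF that] by (simp add: G_group_simps)
    have Fc: "F d (\<sigma> \<circ> x) = \<sigma> \<circ> F d x" if "d \<ge> 1" "\<sigma> \<in> Gal" "x \<in> Xset d" for d \<sigma> x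
      using FG[OF that(1)] that by (simp add: G_group_simps)
    define \<pi> where "\<pi> x = F (per x) x" for x :: "'n \<Rightarrow> 'q alg_closure"
    have p1: "per x \<ge> 1" for x :: "'n \<Rightarrow> 'q alg_closure" using per(1)[of x] by simp
    have xX: "x \<in> Xset (per x)" for x :: "'n \<Rightarrow> 'q alg_closure" by (simp add: Xset_per)
    have perpi: "per (\<pi> x) = per x" for x
      using Bij_mem[OF FB[OF p1] xX] by (simp add: \<pi>_def Xset_per)
    have "bij \<pi>"
    proof (rule bijI)
      show "inj \<pi>"
      proof (rule injI)
        fix x y assume e: "\<pi> x = \<pi> y"
        hence "per x = per y" using perpi by metis
        moreover have "inj_on (F (per x)) (Xset (per x))" using FB[OF p1] by (simp add: Bij_def bij_betw_def)
        ultimately show "x = y" using e xX[of x] xX[of y] by (simp add: \<pi>_def inj_on_def)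
      qed
      show "surj \<pi>"
      proof -
        have "y \<in> range \<pi>" for y
        proof -
          have "F (per y) ` Xset (per y) = Xset (per y)" using FB[OF p1] by (simp add: Bij_def bij_betw_def)
          hence "y \<in> F (per y) ` Xset (per y)" using xX[of y] by simp
          then obtain x where x: "x \<in> Xset (per y)" "F (per y) x = y" by (elim imageE) simp
          hence "per x = per y" by (simp add: Xset_per)
          thus ?thesis using x by (metis \<pi>_def rangeI)
        qed
        thus ?thesis by blast
      qed
    qed
    moreover have "\<forall>\<sigma>\<in>Gal. \<forall>x. \<pi> (\<sigma> \<circ> x) = \<sigma> \<circ> \<pi> x"
    proof (intro ballI allI)
      fix \<sigma> :: "'q alg_closure \<Rightarrow> _" and x :: "'n \<Rightarrow> 'q alg_closure" assume s: "\<sigma> \<in> Gal"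
      have "per (\<sigma> \<circ> x) = per x" by (rule per_Gal[OF s])
      thus "\<pi> (\<sigma> \<circ> x) = \<sigma> \<circ> \<pi> x" unfolding \<pi>_def using Fc[OF p1 s xX] by simp
    qed
    ultimately have piM: "\<pi> \<in> carrier M_group" by (simp add: M_simps)
    have "?\<Psi> \<pi> = F"
    proof
      fix d show "?\<Psi> \<pi> d = F d"
      proof (cases "d \<ge> 1")
        case True
        have "restrict \<pi> (Xset d) = F d"
        proof
          fix x show "restrict \<pi> (Xset d) x = F d x"
          proof (cases "x \<in> Xset d")
            case True thus ?thesis by (simp add: \<pi>_def Xset_per)
          next
            case False
            thus ?thesis using FB[OF \<open>d \<ge> 1\<close>] by (simp add: Bij_def extensional_def)
          qed
        qed
        thus ?thesis using True by simp
      next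
        case False thus ?thesis using Fext[of d] by simp
      qed
    qed
    thus "F \<in> ?\<Psi> ` carrier M_group" using piM by blast
  qed
  have "bij_betw ?\<Psi> (carrier M_group) (carrier (product_group {1..} G_group))"
    unfolding bij_betw_def using inj surj inC by (simp add: image_subset_iff subset_antisym)
  thus ?thesis using hom by (simp add: iso_def)
qed

lemma cyc_simps:
  assumes "d > 0"
  shows "carrier (cyc_power d r) = PiE {1..r} (\<lambda>_. {0..<int d})"
    "monoid.mult (cyc_power d r) = (\<lambda>a b. \<lambda>i\<in>{1..r}. (a i + b i) mod int d)"
    "one (cyc_power d r) = (\<lambda>i\<in>{1..r}. 0)"
  using assms by (simp_all add: cyc_power_def product_group_def carrier_integer_mod_group)

lemma RPerm_simps:
  "carrier (RPerm S) = Bij S" "monoid.mult (RPerm S) = (\<lambda>f g. compose S g f)" "one (RPerm S) = (\<lambda>x\<in>S. x)"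
  by (simp_all add: RPerm_def)

lemma Auto_simps:
  "carrier (AutoGroup G) = auto G"
  "monoid.mult (AutoGroup G) = (\<lambda>g\<in>Bij (carrier G). \<lambda>f\<in>Bij (carrier G). compose (carrier G) g f)"
  by (simp_all add: AutoGroup_def BijGroup_def)

lemma Bij_memS: "\<tau> \<in> Bij S \<Longrightarrow> x \<in> S \<Longrightarrow> \<tau> x \<in> S"
  by (auto simp: Bij_def bij_betw_def)

lemma cpa_in:
  assumes d: "d > 0" and \<tau>: "\<tau> \<in> Bij {1..r}" and a: "a \<in> carrier (cyc_power d r)"
  shows "coord_perm_action d r \<tau> a \<in> carrier (cyc_power d r)"
  using a Bij_memS[OF \<tau>] by (auto simp: coord_perm_action_def cyc_simps[OF d] PiE_iff)

lemma cpa_apply: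
  "a \<in> carrier (cyc_power d r) \<Longrightarrow> coord_perm_action d r \<tau> a = (\<lambda>i\<in>{1..r}. a (\<tau> i))"
  by (simp add: coord_perm_action_def)

lemma cpa_auto:
  assumes d: "d > 0" and \<tau>: "\<tau> \<in> Bij {1..r}"
  shows "coord_perm_action d r \<tau> \<in> auto (cyc_power d r)"
proof -
  let ?C = "carrier (cyc_power d r)" and ?f = "coord_perm_action d r \<tau>"
  have hom: "?f \<in> hom (cyc_power d r) (cyc_power d r)"
  proof (rule homI)
    fix a assume "a \<in> ?C" thus "?f a \<in> ?C" by (rule cpa_in[OF d \<tau>])
  next
    fix a b assume ab: "a \<in> ?C" "b \<in> ?C"
    have "a \<otimes>\<^bsub>cyc_power d r\<^esub> b \<in> ?C"
      using ab d by (auto simp: cyc_simps[OF d] PiE_iff)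
    thus "?f (a \<otimes>\<^bsub>cyc_power d r\<^esub> b) = ?f a \<otimes>\<^bsub>cyc_power d r\<^esub> ?f b"
      using ab Bij_memS[OF \<tau>] by (simp add: cpa_apply cyc_simps[OF d] fun_eq_iff)
  qed
  have inj: "inj_on ?f ?C"
  proof (rule inj_onI)
    fix a b assume ab: "a \<in> ?C" "b \<in> ?C" "?f a = ?f b"
    have sur: "\<tau> ` {1..r} = {1..r}" using \<tau> by (simp add: Bij_def bij_betw_def)
    have "a j = b j" if "j \<in> {1..r}" for j
    proof -
      have "j \<in> \<tau> ` {1..r}" using sur that by simp
      then obtain i where i: "i \<in> {1..r}" "j = \<tau> i" by (elim imageE) simp
      have e: "(\<lambda>i\<in>{1..r}. a (\<tau> i)) = (\<lambda>i\<in>{1..r}. b (\<tau> i))" using ab by (simp add: cpa_apply)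
      show ?thesis using fun_cong[OF e, of i] i by simp
    qed
    note pw = this
    have ea: "a \<in> extensional {1..r}" and eb: "b \<in> extensional {1..r}" using ab by (auto simp: cyc_simps[OF d] PiE_iff)
    show "a = b" by (rule extensionalityI[OF ea eb pw])
  qed
  have sur: "?f ` ?C = ?C"
  proof
    show "?f ` ?C \<subseteq> ?C" using cpa_in[OF d \<tau>] by (simp add: image_subset_iff)
    show "?C \<subseteq> ?f ` ?C"
    proof
      fix b assume b: "b \<in> ?C"
      define \<tau>' where "\<tau>' = inv_into {1..r} \<tau>"
      have bb: "bij_betw \<tau> {1..r} {1..r}" using \<tau> by (simp add: Bij_def)
      have t1: "\<tau>' i \<in> {1..r}" if "i \<in> {1..r}" for i
      proof -
        have "i \<in> \<tau> ` {1..r}" using bb that by (simp add: bij_betw_def)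
        thus ?thesis unfolding \<tau>'_def by (rule inv_into_into)
      qed
      have t2: "\<tau>' (\<tau> i) = i" if "i \<in> {1..r}" for i
        using bb that unfolding \<tau>'_def by (simp add: bij_betw_def)
      define a where "a = (\<lambda>i\<in>{1..r}. b (\<tau>' i))"
      have aC: "a \<in> ?C" using b t1 by (auto simp: a_def cyc_simps[OF d] PiE_iff)
      have "?f a = b"
      proof (rule extensionalityI[of _ "{1..r}"])
        show "?f a \<in> extensional {1..r}" by (simp add: cpa_apply[OF aC])
        show "b \<in> extensional {1..r}" using b by (simp add: cyc_simps[OF d] PiE_iff)
        fix i assume i: "i \<in> {1..r}"
        thus "?f a i = b i" using Bij_memS[OF \<tau> i] by (simp only: cpa_apply[OF aC], simp add: a_def t2)
      qed
      thus "b \<in> ?f ` ?C" using aC by (intro image_eqI[of b ?f a]) simp_all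
    qed
  qed
  have "?f \<in> Bij ?C" using inj sur by (simp add: Bij_def bij_betw_def coord_perm_action_def)
  thus ?thesis using hom by (simp add: auto_def)
qed

lemma cpa_hom:
  assumes d: "d > 0"
  shows "coord_perm_action d r \<in> hom (RPerm {1..r}) (AutoGroup (cyc_power d r))"
proof (rule homI)
  fix \<tau> assume "\<tau> \<in> carrier (RPerm {1..r})"
  thus "coord_perm_action d r \<tau> \<in> carrier (AutoGroup (cyc_power d r))"
    using cpa_auto[OF d] by (simp add: RPerm_simps Auto_simps)
next
  fix \<tau>1 \<tau>2 assume t: "\<tau>1 \<in> carrier (RPerm {1..r})" "\<tau>2 \<in> carrier (RPerm {1..r})"
  hence t': "\<tau>1 \<in> Bij {1..r}" "\<tau>2 \<in> Bij {1..r}" by (simp_all add: RPerm_simps)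
  have B: "coord_perm_action d r \<tau>1 \<in> Bij (carrier (cyc_power d r))" "coord_perm_action d r \<tau>2 \<in> Bij (carrier (cyc_power d r))"
    using cpa_auto[OF d t'(1)] cpa_auto[OF d t'(2)] by (simp_all add: auto_def)
  have "coord_perm_action d r (compose {1..r} \<tau>2 \<tau>1) =
        compose (carrier (cyc_power d r)) (coord_perm_action d r \<tau>1) (coord_perm_action d r \<tau>2)"
  proof
    fix a show "coord_perm_action d r (compose {1..r} \<tau>2 \<tau>1) a =
        compose (carrier (cyc_power d r)) (coord_perm_action d r \<tau>1) (coord_perm_action d r \<tau>2) a"
    proof (cases "a \<in> carrier (cyc_power d r)")
      case True
      have "coord_perm_action d r \<tau>2 a \<in> carrier (cyc_power d r)" using cpa_in[OF d t'(2) True] .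
      thus ?thesis using True Bij_memS[OF t'(1)]
        by (simp add: cpa_apply compose_def fun_eq_iff)
    next
      case False thus ?thesis by (simp add: coord_perm_action_def compose_def)
    qed
  qed
  thus "coord_perm_action d r (\<tau>1 \<otimes>\<^bsub>RPerm {1..r}\<^esub> \<tau>2) =
    coord_perm_action d r \<tau>1 \<otimes>\<^bsub>AutoGroup (cyc_power d r)\<^esub> coord_perm_action d r \<tau>2"
    using B by (simp add: RPerm_simps Auto_simps)
qed

lemma iso_sym_closed:
  assumes "h \<in> iso G H" and cl: "\<And>x y. x \<in> carrier G \<Longrightarrow> y \<in> carrier G \<Longrightarrow> x \<otimes>\<^bsub>G\<^esub> y \<in> carrier G"
  shows "H \<cong> G"
proof -
  have h: "h \<in> hom G H" "bij_betw h (carrier G) (carrier H)"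
    using assms by (auto simp add: iso_def bij_betw_inv_into)
  then have HG: "bij_betw (inv_into (carrier G) h) (carrier H) (carrier G)"
    by (simp add: bij_betw_inv_into)
  have *: "\<And>x. x \<in> carrier H \<Longrightarrow> inv_into (carrier G) h x \<in> carrier G"
    by (meson HG bij_betwE)
  have "inv_into (carrier G) h \<in> hom H G"
  proof (rule homI)
    show "\<And>x. x \<in> carrier H \<Longrightarrow> inv_into (carrier G) h x \<in> carrier G" by (rule *)
    show "inv_into (carrier G) h (x \<otimes>\<^bsub>H\<^esub> y) = inv_into (carrier G) h x \<otimes>\<^bsub>G\<^esub> inv_into (carrier G) h y"
      if "x \<in> carrier H" "y \<in> carrier H" for x y
    proof (rule inv_into_f_eq)
      show "inj_on h (carrier G)"
        using bij_betw_def h(2) by blast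
      show "inv_into (carrier G) h x \<otimes>\<^bsub>G\<^esub> inv_into (carrier G) h y \<in> carrier G"
        by (simp add: * that cl)
      show "h (inv_into (carrier G) h x \<otimes>\<^bsub>G\<^esub> inv_into (carrier G) h y) = x \<otimes>\<^bsub>H\<^esub> y"
        using h bij_betw_inv_into_right [of h] unfolding hom_def by (simp add: "*" that)
    qed
  qed
  hence "inv_into (carrier G) h \<in> iso H G"
    by (simp add: Group.iso_def bij_betw_inv_into h)
  thus ?thesis unfolding is_iso_def by blast
qed

lemma gal_orbit_range: "gal_orbit x = range (\<lambda>k. Fr k \<circ> (x :: 'n::finite \<Rightarrow> 'q::{finite,field} alg_closure))"
proof
  show "gal_orbit x \<subseteq> range (\<lambda>k. Fr k \<circ> x)" unfolding gal_orbit_eq by blast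
  show "range (\<lambda>k. Fr k \<circ> x) \<subseteq> gal_orbit x"
  proof
    fix y assume "y \<in> range (\<lambda>k. Fr k \<circ> x)"
    then obtain k where "y = Fr k \<circ> x" by blast
    hence "y = Fr (k mod per x) \<circ> x" using FrV_mod by simp
    moreover have "k mod per x < per x" using per(1)[of x] by simp
    ultimately show "y \<in> gal_orbit x" unfolding gal_orbit_eq by blast
  qed
qed

lemma orbit_self: "x \<in> gal_orbit (x :: 'n::finite \<Rightarrow> 'q::{finite,field} alg_closure)"
proof -
  have "x = Fr 0 \<circ> x" by (simp add: comp_def)
  thus ?thesis unfolding gal_orbit_range by blast
qed

lemma orbit_sub: "y \<in> gal_orbit x \<Longrightarrow> gal_orbit y \<subseteq> gal_orbit (x :: 'n::finite \<Rightarrow> 'q::{finite,field} alg_closure)"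
proof -
  assume "y \<in> gal_orbit x"
  then obtain k where k: "y = Fr k \<circ> x" unfolding gal_orbit_range by blast
  show ?thesis
  proof
    fix z assume "z \<in> gal_orbit y"
    then obtain j where "z = Fr j \<circ> y" unfolding gal_orbit_range by blast
    hence "z = Fr (j + k) \<circ> x" using k by (simp add: FrV_Fr)
    thus "z \<in> gal_orbit x" unfolding gal_orbit_range by blast
  qed
qed

lemma orbit_symm: "y \<in> gal_orbit x \<Longrightarrow> x \<in> gal_orbit (y :: 'n::finite \<Rightarrow> 'q::{finite,field} alg_closure)"
proof -
  assume "y \<in> gal_orbit x"
  then obtain k where k: "y = Fr k \<circ> x" unfolding gal_orbit_range by blast
  have "1 * k \<le> per x * k" using per(1)[of x] by (intro mult_le_mono1) simp
  hence h: "k \<le> per x * k" by simp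
  have le: "k \<le> per x * (k + 1)" using h by (simp only: distrib_left mult_1_right)
  have "Fr (per x * (k + 1) - k) \<circ> y = Fr (per x * (k + 1)) \<circ> x"
    using k le by (simp add: FrV_Fr)
  also have "\<dots> = x" by (rule FrV_mult_idx[OF per(2)[of x]])
  finally show ?thesis unfolding gal_orbit_range by (metis rangeI)
qed

lemma orbit_eq: "y \<in> gal_orbit x \<Longrightarrow> gal_orbit y = gal_orbit (x :: 'n::finite \<Rightarrow> 'q::{finite,field} alg_closure)"
  using orbit_sub orbit_symm by (metis subset_antisym)

lemma mod_add_cancel_int: "(A + C) mod D = (B + C) mod (D::int) \<Longrightarrow> A mod D = B mod D"
proof -
  assume h: "(A + C) mod D = (B + C) mod D"
  have "A mod D = ((A + C) - C) mod D" by simp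
  also have "\<dots> = ((A + C) mod D - C) mod D" by (simp only: mod_diff_left_eq)
  also have "\<dots> = ((B + C) mod D - C) mod D" by (simp only: h)
  also have "\<dots> = ((B + C) - C) mod D" by (simp only: mod_diff_left_eq)
  finally show ?thesis by simp
qed
lemma mod_add_cancel_nat: "(a + c) mod d = (b + c) mod (d::nat) \<Longrightarrow> a mod d = b mod d"
proof -
  assume "(a + c) mod d = (b + c) mod d"
  hence "int ((a + c) mod d) = int ((b + c) mod d)" by simp
  hence "(int a + int c) mod int d = (int b + int c) mod int d" by (simp add: zmod_int)
  hence "int a mod int d = int b mod int d" by (rule mod_add_cancel_int)
  thus ?thesis by (simp flip: zmod_int)
qed

lemma nat_mod_add: "u \<ge> 0 \<Longrightarrow> v \<ge> 0 \<Longrightarrow> nat ((u + v) mod int d) = (nat u + nat v) mod d"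
proof -
  assume "u \<ge> 0" "v \<ge> 0"
  then obtain A B where "u = int A" "v = int B" by (metis nonneg_int_cases)
  thus ?thesis by (simp only: of_nat_add[symmetric] zmod_int[symmetric] nat_int)
qed

locale wr =
  fixes d :: nat and r :: nat and rep :: "nat \<Rightarrow> 'n::finite \<Rightarrow> 'q::{finite,field} alg_closure"
  assumes d0: "d > 0"
    and repX: "\<And>i. i \<in> {1..r} \<Longrightarrow> rep i \<in> Xset d"
    and rep_inj: "\<And>i j. i \<in> {1..r} \<Longrightarrow> j \<in> {1..r} \<Longrightarrow> rep i \<in> gal_orbit (rep j) \<Longrightarrow> i = j"
    and cover: "\<And>x. x \<in> Xset d \<Longrightarrow> \<exists>i\<in>{1..r}. x \<in> gal_orbit (rep i)"
begin

abbreviation "SS \<equiv> {1..r}"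
abbreviation "XX \<equiv> (Xset d :: ('n \<Rightarrow> 'q alg_closure) set)"

lemma per_rep: "i \<in> SS \<Longrightarrow> per (rep i) = d"
  using repX by (simp add: Xset_per)

lemma E_in: "i \<in> SS \<Longrightarrow> Fr a \<circ> rep i \<in> XX"
  using repX Xset_Fr by blast

lemma Fr_E: "i \<in> SS \<Longrightarrow> a mod d = b mod d \<Longrightarrow> Fr a \<circ> rep i = Fr b \<circ> rep i"
proof -
  assume i: "i \<in> SS" and ab: "a mod d = b mod d"
  have "Fr a \<circ> rep i = Fr (a mod per (rep i)) \<circ> rep i" by (rule FrV_mod)
  also have "\<dots> = Fr (b mod per (rep i)) \<circ> rep i" by (simp only: per_rep[OF i] ab)
  also have "\<dots> = Fr b \<circ> rep i" by (rule FrV_mod[symmetric])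
  finally show ?thesis .
qed

lemma E_eq:
  assumes i: "i \<in> SS" and j: "j \<in> SS" and e: "Fr a \<circ> rep i = Fr b \<circ> rep j"
  shows "i = j \<and> a mod d = b mod d"
proof -
  have "Fr a \<circ> rep i \<in> gal_orbit (rep i)" unfolding gal_orbit_range by blast
  hence o1: "gal_orbit (Fr a \<circ> rep i) = gal_orbit (rep i)" by (rule orbit_eq)
  have "Fr a \<circ> rep i \<in> gal_orbit (rep j)" unfolding e gal_orbit_range by blast
  hence "gal_orbit (Fr a \<circ> rep i) = gal_orbit (rep j)" by (rule orbit_eq)
  hence "rep i \<in> gal_orbit (rep j)" using o1 orbit_self[of "rep i"] by simp
  hence ij: "i = j" using rep_inj i j by blast
  have "Fr (a mod d) \<circ> rep i = Fr (b mod d) \<circ> rep i"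
    using e ij FrV_mod[of a "rep i"] FrV_mod[of b "rep i"] per_rep[OF i] by simp
  hence "a mod d = b mod d" using FrV_inj_per[of "a mod d" "rep i" "b mod d"] per_rep[OF i] d0 by simp
  thus ?thesis using ij by simp
qed

lemma decomp: "x \<in> XX \<Longrightarrow> \<exists>i\<in>SS. \<exists>a. x = Fr a \<circ> rep i"
  using cover unfolding gal_orbit_range by blast

definition idx :: "('n \<Rightarrow> 'q alg_closure) \<Rightarrow> nat" where
  "idx x = (SOME i. i \<in> SS \<and> (\<exists>a. x = Fr a \<circ> rep i))"
definition ofs :: "('n \<Rightarrow> 'q alg_closure) \<Rightarrow> nat" where
  "ofs x = (SOME a. x = Fr a \<circ> rep (idx x))"

lemma idx_ofs: "x \<in> XX \<Longrightarrow> idx x \<in> SS \<and> x = Fr (ofs x) \<circ> rep (idx x)"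
proof -
  assume "x \<in> XX"
  hence "\<exists>i. i \<in> SS \<and> (\<exists>a. x = Fr a \<circ> rep i)" using decomp by blast
  hence 1: "idx x \<in> SS \<and> (\<exists>a. x = Fr a \<circ> rep (idx x))" unfolding idx_def by (rule someI_ex)
  hence "\<exists>a. x = Fr a \<circ> rep (idx x)" by simp
  hence "x = Fr (SOME a. x = Fr a \<circ> rep (idx x)) \<circ> rep (idx x)" by (rule someI_ex)
  hence "x = Fr (ofs x) \<circ> rep (idx x)" unfolding ofs_def .
  thus ?thesis using 1 by simp
qed

lemma idx_ofs_E: "i \<in> SS \<Longrightarrow> idx (Fr a \<circ> rep i) = i \<and> ofs (Fr a \<circ> rep i) mod d = a mod d"
proof -
  assume i: "i \<in> SS"
  have "idx (Fr a \<circ> rep i) \<in> SS \<and> Fr a \<circ> rep i = Fr (ofs (Fr a \<circ> rep i)) \<circ> rep (idx (Fr a \<circ> rep i))"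
    using idx_ofs[OF E_in[OF i]] .
  hence eq: "Fr a \<circ> rep i = Fr (ofs (Fr a \<circ> rep i)) \<circ> rep (idx (Fr a \<circ> rep i))" and ii: "idx (Fr a \<circ> rep i) \<in> SS" by simp_all
  from E_eq[OF i ii eq] show ?thesis by simp
qed

abbreviation "W \<equiv> semidirect_product (cyc_power d r) (RPerm SS) (coord_perm_action d r)"

lemma W_simps:
  "carrier W = carrier (cyc_power d r) \<times> Bij SS"
  "monoid.mult W = (\<lambda>p q. (fst p \<otimes>\<^bsub>cyc_power d r\<^esub> coord_perm_action d r (snd p) (fst q), compose SS (snd q) (snd p)))"
  by (simp_all add: semidirect_product_def RPerm_simps)

lemma W_closed: "p \<in> carrier W \<Longrightarrow> q \<in> carrier W \<Longrightarrow> p \<otimes>\<^bsub>W\<^esub> q \<in> carrier W"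
proof -
  assume p: "p \<in> carrier W" and q: "q \<in> carrier W"
  have p1: "p \<in> carrier (cyc_power d r) \<times> Bij SS" using p by (simp only: W_simps)
  have q1: "q \<in> carrier (cyc_power d r) \<times> Bij SS" using q by (simp only: W_simps)
  have "snd p \<in> Bij SS" "fst q \<in> carrier (cyc_power d r)" using p1 q1 by auto
  hence a: "coord_perm_action d r (snd p) (fst q) \<in> carrier (cyc_power d r)" by (rule cpa_in[OF d0])
  have "fst p \<otimes>\<^bsub>cyc_power d r\<^esub> coord_perm_action d r (snd p) (fst q) \<in> carrier (cyc_power d r)"
    using p1 a d0 by (auto simp: cyc_simps[OF d0] PiE_iff)
  moreover have "compose SS (snd q) (snd p) \<in> Bij SS" using p1 q1 compose_Bij by auto
  ultimately show ?thesis by (simp only: W_simps) simp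
qed

definition \<Theta> :: "(nat \<Rightarrow> int) \<times> (nat \<Rightarrow> nat) \<Rightarrow> ('n \<Rightarrow> 'q alg_closure) \<Rightarrow> ('n \<Rightarrow> 'q alg_closure)" where
  "\<Theta> p = (\<lambda>x\<in>XX. Fr (ofs x + nat (fst p (idx x))) \<circ> rep (snd p (idx x)))"

lemma \<Theta>_E:
  assumes i: "i \<in> SS" and t: "snd p \<in> Bij SS"
  shows "\<Theta> p (Fr a \<circ> rep i) = Fr (a + nat (fst p i)) \<circ> rep (snd p i)"
proof -
  have io: "idx (Fr a \<circ> rep i) = i" "ofs (Fr a \<circ> rep i) mod d = a mod d" using idx_ofs_E[OF i] by auto
  have ti: "snd p i \<in> SS" using Bij_memS[OF t i] .
  have "(ofs (Fr a \<circ> rep i) + nat (fst p i)) mod d = (a + nat (fst p i)) mod d"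
    using io(2) by (metis mod_add_left_eq)
  hence fe: "Fr (ofs (Fr a \<circ> rep i) + nat (fst p i)) \<circ> rep (snd p i) = Fr (a + nat (fst p i)) \<circ> rep (snd p i)"
    by (rule Fr_E[OF ti])
  have "\<Theta> p (Fr a \<circ> rep i) = Fr (ofs (Fr a \<circ> rep i) + nat (fst p i)) \<circ> rep (snd p i)"
    unfolding \<Theta>_def using E_in[OF i] io(1) by simp
  thus ?thesis using fe by simp
qed

lemma \<Theta>_rep:
  assumes i: "i \<in> SS" and t: "snd p \<in> Bij SS"
  shows "\<Theta> p (rep i) = Fr (nat (fst p i)) \<circ> rep (snd p i)"
  using \<Theta>_E[OF i t, of 0] by (simp add: comp_def)

lemma Bij_inj: "\<tau> \<in> Bij SS \<Longrightarrow> inj_on \<tau> SS" by (simp add: Bij_def bij_betw_def)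

lemma \<Theta>_in:
  assumes p: "p \<in> carrier W"
  shows "\<Theta> p \<in> carrier (G_group d)"
proof -
  obtain n \<tau> where p': "p = (n, \<tau>)" by (cases p)
  have t: "\<tau> \<in> Bij SS" using p unfolding p' W_simps by simp
  have t': "snd p \<in> Bij SS" using t p' by simp
  have into: "\<Theta> p ` XX \<subseteq> XX"
  proof
    fix y assume "y \<in> \<Theta> p ` XX"
    then obtain x where x: "x \<in> XX" "y = \<Theta> p x" by (elim imageE) simp
    obtain i a where ia: "i \<in> SS" "x = Fr a \<circ> rep i" using decomp[OF x(1)] by (elim bexE exE)
    have "y = Fr (a + nat (fst p i)) \<circ> rep (snd p i)" using x(2) ia \<Theta>_E[OF ia(1) t'] by simp
    thus "y \<in> XX" using E_in[OF Bij_memS[OF t' ia(1)]] by simp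
  qed
  have inj: "inj_on (\<Theta> p) XX"
  proof (rule inj_onI)
    fix x y assume x: "x \<in> XX" and y: "y \<in> XX" and e: "\<Theta> p x = \<Theta> p y"
    obtain i a where ia: "i \<in> SS" "x = Fr a \<circ> rep i" using decomp[OF x] by (elim bexE exE)
    obtain j b where jb: "j \<in> SS" "y = Fr b \<circ> rep j" using decomp[OF y] by (elim bexE exE)
    have ex: "\<Theta> p x = Fr (a + nat (fst p i)) \<circ> rep (snd p i)" unfolding ia(2) by (rule \<Theta>_E[OF ia(1) t'])
    have ey: "\<Theta> p y = Fr (b + nat (fst p j)) \<circ> rep (snd p j)" unfolding jb(2) by (rule \<Theta>_E[OF jb(1) t'])
    have "Fr (a + nat (n i)) \<circ> rep (\<tau> i) = Fr (b + nat (n j)) \<circ> rep (\<tau> j)"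
      using e ex ey unfolding p' by simp
    hence tt: "\<tau> i = \<tau> j \<and> (a + nat (n i)) mod d = (b + nat (n j)) mod d"
      by (rule E_eq[OF Bij_memS[OF t ia(1)] Bij_memS[OF t jb(1)]])
    hence ij: "i = j" using inj_onD[OF Bij_inj[OF t] _ ia(1) jb(1)] by simp
    hence m: "(a + nat (n i)) mod d = (b + nat (n i)) mod d" using tt by simp
    have am: "a mod d = b mod d" using m by (rule mod_add_cancel_nat)
    show "x = y" using Fr_E[OF ia(1) am] ia(2) jb(2) ij by simp
  qed
  have "\<Theta> p ` XX = XX" using endo_inj_surj[OF Xset_finite into inj] .
  hence bb: "bij_betw (\<Theta> p) XX XX" using inj by (simp add: bij_betw_def)
  have "\<Theta> p \<in> extensional XX" unfolding \<Theta>_def by (rule restrict_extensional)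
  hence B: "\<Theta> p \<in> Bij XX" using bb by (simp add: Bij_def)
  have C: "\<forall>x\<in>XX. \<Theta> p (Fr 1 \<circ> x) = Fr 1 \<circ> \<Theta> p x"
  proof
    fix x assume x: "x \<in> XX"
    obtain i a where ia: "i \<in> SS" "x = Fr a \<circ> rep i" using decomp[OF x] by (elim bexE exE)
    have "Fr 1 \<circ> x = Fr (1 + a) \<circ> rep i" using ia by (simp add: FrV_Fr)
    hence "\<Theta> p (Fr 1 \<circ> x) = Fr (1 + a + nat (fst p i)) \<circ> rep (snd p i)" using \<Theta>_E[OF ia(1) t'] by simp
    also have "\<dots> = Fr 1 \<circ> (Fr (a + nat (fst p i)) \<circ> rep (snd p i))" by (simp add: FrV_Fr add.assoc)
    also have "\<dots> = Fr 1 \<circ> \<Theta> p x" using ia \<Theta>_E[OF ia(1) t'] by simp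
    finally show "\<Theta> p (Fr 1 \<circ> x) = Fr 1 \<circ> \<Theta> p x" .
  qed
  show ?thesis unfolding G_char[OF d0] using B C by (rule conjI)
qed

end

lemma G_comm:
  assumes "\<pi> \<in> carrier (G_group d)" "x \<in> Xset d"
  shows "\<pi> (Fr k \<circ> x) = Fr k \<circ> \<pi> (x :: 'n::finite \<Rightarrow> 'q::{finite,field} alg_closure)"
proof -
  have "\<forall>\<sigma>\<in>Gal. \<forall>x\<in>Xset d. \<pi> (\<sigma> \<circ> x) = \<sigma> \<circ> \<pi> x" using assms(1) by (simp add: G_group_simps)
  hence "\<forall>x\<in>Xset d. \<pi> (Fr k \<circ> x) = Fr k \<circ> \<pi> (x :: 'n::finite \<Rightarrow> 'q::{finite,field} alg_closure)"
    using Fr_Gal[of k] by (rule bspec)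
  thus ?thesis using assms(2) by (rule bspec)
qed

context wr
begin

lemma \<Theta>_hom:
  assumes p: "p \<in> carrier W" and q: "q \<in> carrier W"
  shows "\<Theta> (p \<otimes>\<^bsub>W\<^esub> q) = compose XX (\<Theta> q) (\<Theta> p)"
proof -
  obtain n1 \<tau>1 where p': "p = (n1, \<tau>1)" by (cases p)
  obtain n2 \<tau>2 where q': "q = (n2, \<tau>2)" by (cases q)
  have p1: "n1 \<in> carrier (cyc_power d r)" "\<tau>1 \<in> Bij SS" using p unfolding p' W_simps by simp_all
  have q1: "n2 \<in> carrier (cyc_power d r)" "\<tau>2 \<in> Bij SS" using q unfolding q' W_simps by simp_all
  define n where "n = n1 \<otimes>\<^bsub>cyc_power d r\<^esub> coord_perm_action d r \<tau>1 n2"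
  have pq: "p \<otimes>\<^bsub>W\<^esub> q = (n, compose SS \<tau>2 \<tau>1)" unfolding p' q' n_def by (simp only: W_simps fst_conv snd_conv)
  have pqC: "snd (p \<otimes>\<^bsub>W\<^esub> q) \<in> Bij SS" using W_closed[OF p q] unfolding W_simps by auto
  have n_i: "n i = (n1 i + n2 (\<tau>1 i)) mod int d" if i: "i \<in> SS" for i
  proof -
    have "coord_perm_action d r \<tau>1 n2 = (\<lambda>i\<in>SS. n2 (\<tau>1 i))" by (rule cpa_apply[OF q1(1)])
    thus ?thesis unfolding n_def using i by (simp add: cyc_simps[OF d0])
  qed
  have nn: "n1 i \<ge> 0" "n2 i \<ge> 0" if "i \<in> SS" for i
    using p1(1) q1(1) that by (auto simp: cyc_simps[OF d0] PiE_iff)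
  show ?thesis
  proof
    fix x show "\<Theta> (p \<otimes>\<^bsub>W\<^esub> q) x = compose XX (\<Theta> q) (\<Theta> p) x"
    proof (cases "x \<in> XX")
      case False thus ?thesis by (simp add: \<Theta>_def compose_def)
    next
      case True
      obtain i a where ia: "i \<in> SS" "x = Fr a \<circ> rep i" using decomp[OF True] by (elim bexE exE)
      have t1: "\<tau>1 i \<in> SS" using Bij_memS[OF p1(2) ia(1)] .
      have "\<Theta> (p \<otimes>\<^bsub>W\<^esub> q) x = Fr (a + nat (n i)) \<circ> rep (\<tau>2 (\<tau>1 i))"
        using \<Theta>_E[OF ia(1) pqC, of a] ia(1) unfolding ia(2) pq by (simp add: compose_def)
      also have "\<dots> = Fr (a + nat (n1 i) + nat (n2 (\<tau>1 i))) \<circ> rep (\<tau>2 (\<tau>1 i))"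
      proof (rule Fr_E[OF Bij_memS[OF q1(2) t1]])
        have "nat (n i) = (nat (n1 i) + nat (n2 (\<tau>1 i))) mod d"
          using n_i[OF ia(1)] nat_mod_add[OF nn(1)[OF ia(1)] nn(2)[OF t1]] by simp
        thus "(a + nat (n i)) mod d = (a + nat (n1 i) + nat (n2 (\<tau>1 i))) mod d"
          by (simp add: mod_add_right_eq add.assoc)
      qed
      also have "\<dots> = \<Theta> q (\<Theta> p x)"
      proof -
        have "\<Theta> p x = Fr (a + nat (n1 i)) \<circ> rep (\<tau>1 i)" using \<Theta>_E[OF ia(1), of p a] p1(2) unfolding ia(2) p' by simp
        moreover have "\<Theta> q (Fr (a + nat (n1 i)) \<circ> rep (\<tau>1 i)) = Fr (a + nat (n1 i) + nat (n2 (\<tau>1 i))) \<circ> rep (\<tau>2 (\<tau>1 i))"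
          using \<Theta>_E[OF t1, of q "a + nat (n1 i)"] q1(2) unfolding q' by simp
        ultimately show ?thesis by simp
      qed
      also have "\<dots> = compose XX (\<Theta> q) (\<Theta> p) x" using True by (simp add: compose_def)
      finally show ?thesis .
    qed
  qed
qed

lemma \<Theta>_inj: "inj_on \<Theta> (carrier W)"
proof (rule inj_onI)
  fix p q assume p: "p \<in> carrier W" and q: "q \<in> carrier W" and e: "\<Theta> p = \<Theta> q"
  obtain n1 \<tau>1 where p': "p = (n1, \<tau>1)" by (cases p)
  obtain n2 \<tau>2 where q': "q = (n2, \<tau>2)" by (cases q)
  have p1: "n1 \<in> carrier (cyc_power d r)" "\<tau>1 \<in> Bij SS" using p unfolding p' W_simps by simp_all
  have q1: "n2 \<in> carrier (cyc_power d r)" "\<tau>2 \<in> Bij SS" using q unfolding q' W_simps by simp_all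
  have both: "\<tau>1 i = \<tau>2 i \<and> n1 i = n2 i" if i: "i \<in> SS" for i
  proof -
    have "\<Theta> p (rep i) = \<Theta> q (rep i)" using e by simp
    hence "Fr (nat (n1 i)) \<circ> rep (\<tau>1 i) = Fr (nat (n2 i)) \<circ> rep (\<tau>2 i)"
      using \<Theta>_rep[OF i, of p] \<Theta>_rep[OF i, of q] p1(2) q1(2) unfolding p' q' by simp
    hence h: "\<tau>1 i = \<tau>2 i \<and> nat (n1 i) mod d = nat (n2 i) mod d"
      by (rule E_eq[OF Bij_memS[OF p1(2) i] Bij_memS[OF q1(2) i]])
    have r1: "0 \<le> n1 i \<and> n1 i < int d" "0 \<le> n2 i \<and> n2 i < int d"
      using p1(1) q1(1) i by (auto simp: cyc_simps[OF d0] PiE_iff)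
    have "nat (n1 i) < d" using r1(1) by (simp add: nat_less_iff)
    hence m1: "nat (n1 i) mod d = nat (n1 i)" by (rule mod_less)
    have "nat (n2 i) < d" using r1(2) by (simp add: nat_less_iff)
    hence m2: "nat (n2 i) mod d = nat (n2 i)" by (rule mod_less)
    have "nat (n1 i) = nat (n2 i)" using h m1 m2 by simp
    hence "n1 i = n2 i" using r1 by (simp add: nat_eq_iff2)
    thus ?thesis using h by simp
  qed
  have "n1 = n2"
  proof (rule extensionalityI[of _ SS])
    show "n1 \<in> extensional SS" "n2 \<in> extensional SS" using p1(1) q1(1) by (simp_all add: cyc_simps[OF d0] PiE_iff)
    show "\<And>i. i \<in> SS \<Longrightarrow> n1 i = n2 i" using both by simp
  qed
  moreover have "\<tau>1 = \<tau>2"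
  proof (rule extensionalityI[of _ SS])
    show "\<tau>1 \<in> extensional SS" "\<tau>2 \<in> extensional SS" using p1(2) q1(2) by (simp_all add: Bij_def)
    show "\<And>i. i \<in> SS \<Longrightarrow> \<tau>1 i = \<tau>2 i" using both by simp
  qed
  ultimately show "p = q" unfolding p' q' by simp
qed

lemma \<Theta>_surj: "carrier (G_group d) \<subseteq> \<Theta> ` carrier W"
proof
  fix \<pi> :: "('n \<Rightarrow> 'q alg_closure) \<Rightarrow> ('n \<Rightarrow> 'q alg_closure)" assume \<pi>: "\<pi> \<in> carrier (G_group d)"
  have B: "\<pi> \<in> Bij XX" using \<pi> by (simp add: G_group_simps)
  define J where "J i = idx (\<pi> (rep i))" for i
  define c where "c i = ofs (\<pi> (rep i))" for i
  have Jc: "J i \<in> SS \<and> \<pi> (rep i) = Fr (c i) \<circ> rep (J i)" if "i \<in> SS" for i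
    unfolding J_def c_def using idx_ofs[OF Bij_mem[OF B repX[OF that]]] .
  define n where "n = (\<lambda>i\<in>SS. int (c i mod d))"
  define \<tau> where "\<tau> = (\<lambda>i\<in>SS. J i)"
  have nC: "n \<in> carrier (cyc_power d r)" using d0 by (auto simp: n_def cyc_simps[OF d0] PiE_iff)
  have tinj: "inj_on \<tau> SS"
  proof (rule inj_onI)
    fix i i' assume i: "i \<in> SS" and i': "i' \<in> SS" and e: "\<tau> i = \<tau> i'"
    hence Je: "J i = J i'" by (simp add: \<tau>_def)
    define e where "e = d * c i' - c i' + c i"
    have "1 * c i' \<le> d * c i'" using d0 by (intro mult_le_mono1) simp
    hence h: "c i' \<le> d * c i'" by simp
    have ee: "e + c i' = d * c i' + c i" unfolding e_def using h by arith
    have "\<pi> (Fr e \<circ> rep i') = Fr e \<circ> \<pi> (rep i')" by (rule G_comm[OF \<pi> repX[OF i']])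
    also have "\<dots> = Fr (e + c i') \<circ> rep (J i)" using Jc[OF i'] Je by (simp add: FrV_Fr)
    also have "\<dots> = Fr (c i) \<circ> rep (J i)"
      by (rule Fr_E[OF conjunct1[OF Jc[OF i]]]) (simp add: ee)
    also have "\<dots> = \<pi> (rep i)" using Jc[OF i] by simp
    finally have "\<pi> (Fr e \<circ> rep i') = \<pi> (rep i)" .
    moreover have "inj_on \<pi> XX" using B by (simp add: Bij_def bij_betw_def)
    ultimately have "Fr e \<circ> rep i' = Fr 0 \<circ> rep i"
      using E_in[OF i'] repX[OF i] by (simp add: inj_on_def comp_def)
    from E_eq[OF i' i this] show "i = i'" by simp
  qed
  have tB: "\<tau> \<in> Bij SS"
  proof -
    have into: "\<tau> ` SS \<subseteq> SS" using Jc by (auto simp: \<tau>_def)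
    have "\<tau> ` SS = SS" using endo_inj_surj[OF _ into tinj] by simp
    thus ?thesis using tinj by (simp add: Bij_def bij_betw_def \<tau>_def)
  qed
  have pW: "(n, \<tau>) \<in> carrier W" using nC tB by (simp only: W_simps) simp
  have "\<Theta> (n, \<tau>) = \<pi>"
  proof
    fix x show "\<Theta> (n, \<tau>) x = \<pi> x"
    proof (cases "x \<in> XX")
      case False
      have "\<pi> \<in> extensional XX" using B by (simp add: Bij_def)
      thus ?thesis using False by (simp add: \<Theta>_def extensional_def)
    next
      case True
      obtain i a where ia: "i \<in> SS" "x = Fr a \<circ> rep i" using decomp[OF True] by (elim bexE exE)
      have "\<Theta> (n, \<tau>) x = Fr (a + c i mod d) \<circ> rep (J i)"
        using \<Theta>_E[OF ia(1), of "(n, \<tau>)" a] tB ia(1) unfolding ia(2) by (simp add: n_def \<tau>_def)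
      also have "\<dots> = Fr (a + c i) \<circ> rep (J i)"
        by (rule Fr_E[OF conjunct1[OF Jc[OF ia(1)]]]) (simp add: mod_add_right_eq)
      also have "\<dots> = Fr a \<circ> \<pi> (rep i)" using Jc[OF ia(1)] by (simp add: FrV_Fr)
      also have "\<dots> = \<pi> x" unfolding ia(2) by (rule G_comm[OF \<pi> repX[OF ia(1)], symmetric])
      finally show ?thesis .
    qed
  qed
  thus "\<pi> \<in> \<Theta> ` carrier W" using pW by (intro image_eqI[of \<pi> \<Theta> "(n, \<tau>)"]) simp_all
qed

lemma G_iso_W: "(G_group d :: (('n \<Rightarrow> 'q alg_closure) \<Rightarrow> _) monoid) \<cong> W"
proof -
  have hom: "\<Theta> \<in> hom W (G_group d)"
  proof (rule homI)
    fix p assume "p \<in> carrier W" thus "\<Theta> p \<in> carrier (G_group d)" by (rule \<Theta>_in)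
  next
    fix p q assume pq: "p \<in> carrier W" "q \<in> carrier W"
    have "\<Theta> (p \<otimes>\<^bsub>W\<^esub> q) = compose XX (\<Theta> q) (\<Theta> p)" by (rule \<Theta>_hom[OF pq])
    thus "\<Theta> (p \<otimes>\<^bsub>W\<^esub> q) = \<Theta> p \<otimes>\<^bsub>G_group d\<^esub> \<Theta> q" by (simp only: G_group_simps)
  qed
  have "\<Theta> ` carrier W = carrier (G_group d)" using \<Theta>_surj \<Theta>_in by blast
  hence "bij_betw \<Theta> (carrier W) (carrier (G_group d))" using \<Theta>_inj by (simp add: bij_betw_def)
  hence "\<Theta> \<in> iso W (G_group d)" using hom by (simp add: iso_def)
  thus ?thesis by (rule iso_sym_closed) (rule W_closed)
qed

end

lemma exists_rep:
  assumes d: "d > 0"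
  shows "\<exists>rep :: nat \<Rightarrow> 'n \<Rightarrow> 'q alg_closure. wr d (card (Xset d :: ('n::finite \<Rightarrow> 'q::{finite,field} alg_closure) set) div d) rep"
proof -
  let ?X = "Xset d :: ('n \<Rightarrow> 'q alg_closure) set"
  define Orb where "Orb = gal_orbit ` ?X"
  have finO: "finite Orb" unfolding Orb_def by (rule finite_imageI[OF Xset_finite])
  have sub: "gal_orbit x \<subseteq> ?X" if "x \<in> ?X" for x
  proof
    fix y assume "y \<in> gal_orbit x"
    then obtain k where "y = Fr k \<circ> x" unfolding gal_orbit_range by blast
    thus "y \<in> ?X" using Xset_Fr[OF that] by simp
  qed
  have U: "\<Union>Orb = ?X"
  proof
    show "\<Union>Orb \<subseteq> ?X" unfolding Orb_def using sub by blast
    show "?X \<subseteq> \<Union>Orb" unfolding Orb_def using orbit_self by blast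
  qed
  have cardc: "card c = d" if "c \<in> Orb" for c
    using that card_gal_orbit(2) unfolding Orb_def by (auto simp: Xset_per)
  have disj: "c1 \<inter> c2 = {}" if cc: "c1 \<in> Orb" "c2 \<in> Orb" "c1 \<noteq> c2" for c1 c2
  proof (rule ccontr)
    assume "c1 \<inter> c2 \<noteq> {}"
    then obtain z where z: "z \<in> c1" "z \<in> c2" by blast
    obtain x1 x2 where x: "c1 = gal_orbit x1" "c2 = gal_orbit x2" using cc(1,2) unfolding Orb_def by blast
    have "c1 = gal_orbit z" using orbit_eq[of z x1] z(1) x(1) by simp
    moreover have "c2 = gal_orbit z" using orbit_eq[of z x2] z(2) x(2) by simp
    ultimately show False using cc(3) by simp
  qed
  have "d * card Orb = card (\<Union>Orb)" by (rule card_partition[OF finO]) (use U Xset_finite cardc disj in auto)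
  hence "card ?X = d * card Orb" using U by simp
  hence cO: "card ?X div d = card Orb" using d by simp
  obtain b where b: "bij_betw b {1..card Orb} Orb" using ex_bij_betw_nat_finite_1[OF finO] by blast
  define rep where "rep i = (SOME x. x \<in> b i)" for i
  have rep1: "rep i \<in> b i \<and> b i = gal_orbit (rep i) \<and> rep i \<in> ?X" if i: "i \<in> {1..card Orb}" for i
  proof -
    have "b i \<in> Orb" using b i by (auto simp: bij_betw_def)
    then obtain x0 where x0: "x0 \<in> ?X" "b i = gal_orbit x0" unfolding Orb_def by blast
    have "\<exists>x. x \<in> b i" using x0 orbit_self by blast
    hence ri: "rep i \<in> b i" unfolding rep_def by (rule someI_ex)
    hence "gal_orbit (rep i) = b i" using x0 orbit_eq[of "rep i" x0] by simp
    moreover have "rep i \<in> ?X" using ri x0 sub by blast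
    ultimately show ?thesis using ri by simp
  qed
  have "wr d (card Orb) rep"
  proof
    show "d > 0" by (rule d)
    show "\<And>i. i \<in> {1..card Orb} \<Longrightarrow> rep i \<in> ?X" using rep1 by blast
    show "i = j" if "i \<in> {1..card Orb}" "j \<in> {1..card Orb}" "rep i \<in> gal_orbit (rep j)" for i j
    proof -
      have "gal_orbit (rep i) = gal_orbit (rep j)" using orbit_eq[OF that(3)] by simp
      hence "b i = b j" using rep1[OF that(1)] rep1[OF that(2)] by simp
      thus ?thesis by (rule inj_onD[OF bij_betw_imp_inj_on[OF b] _ that(1) that(2)])
    qed
    show "\<exists>i\<in>{1..card Orb}. x \<in> gal_orbit (rep i)" if x: "x \<in> ?X" for x
    proof -
      have "gal_orbit x \<in> b ` {1..card Orb}" using b x unfolding Orb_def bij_betw_def by blast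
      then obtain i where i: "i \<in> {1..card Orb}" "gal_orbit x = b i" by (elim imageE) simp
      hence "x \<in> gal_orbit (rep i)" using rep1[OF i(1)] orbit_self[of x] by simp
      thus ?thesis using i(1) by blast
    qed
  qed
  hence "wr d (card ?X div d) rep" by (simp only: cO)
  thus ?thesis by blast
qed

lemma G_iso_main:
  fixes T :: "('n::finite \<Rightarrow> 'q::{finite,field} alg_closure) itself"
  assumes "d \<ge> 1"
  shows "(G_group d :: (('n \<Rightarrow> 'q alg_closure) \<Rightarrow> _) monoid)
              \<cong> semidirect_product (cyc_power d (r_num T d)) (RPerm {1..r_num T d})
                   (coord_perm_action d (r_num T d))"
proof -
  have d: "d > 0" using assms by simp
  obtain rep :: "nat \<Rightarrow> 'n \<Rightarrow> 'q alg_closure" where w: "wr d (card (Xset d :: ('n \<Rightarrow> 'q alg_closure) set) div d) rep"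
    using exists_rep[OF d] by blast
  have "r_num T d = card (Xset d :: ('n \<Rightarrow> 'q alg_closure) set) div d" by (simp add: r_num_def)
  thus ?thesis using wr.G_iso_W[OF w] by simp
qed

theorem mainTheorem9:
  fixes T :: "('n::finite \<Rightarrow> 'q::{finite,field} alg_closure) itself"
  shows "(\<lambda>\<pi>. \<lambda>d\<in>{1::nat..}. restrict \<pi> (Xset d))
            \<in> iso (M_group :: (('n \<Rightarrow> 'q alg_closure) \<Rightarrow> _) monoid) (product_group {1..} G_group)
       \<and> (\<forall>d::nat. d \<ge> 1 \<longrightarrow>
            (G_group d :: (('n \<Rightarrow> 'q alg_closure) \<Rightarrow> _) monoid) \<cong> wreath_cyc d (r_num T d))
       \<and> (\<forall>d::nat. d \<ge> 1 \<longrightarrow>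
            coord_perm_action d (r_num T d)
              \<in> hom (RPerm {1..r_num T d}) (AutoGroup (cyc_power d (r_num T d)))
          \<and> (G_group d :: (('n \<Rightarrow> 'q alg_closure) \<Rightarrow> _) monoid)
              \<cong> semidirect_product (cyc_power d (r_num T d)) (RPerm {1..r_num T d})
                   (coord_perm_action d (r_num T d)))"
proof (intro conjI allI impI)
  show "(\<lambda>\<pi>. \<lambda>d\<in>{1::nat..}. restrict \<pi> (Xset d))
            \<in> iso (M_group :: (('n \<Rightarrow> 'q alg_closure) \<Rightarrow> _) monoid) (product_group {1..} G_group)"
    by (rule part1)
next
  fix d :: nat assume "d \<ge> 1"
  thus "(G_group d :: (('n \<Rightarrow> 'q alg_closure) \<Rightarrow> _) monoid) \<cong> wreath_cyc d (r_num T d)"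
    unfolding wreath_cyc_def by (rule G_iso_main)
next
  fix d :: nat assume "d \<ge> 1"
  thus "coord_perm_action d (r_num T d) \<in> hom (RPerm {1..r_num T d}) (AutoGroup (cyc_power d (r_num T d)))"
    by (intro cpa_hom) simp
next
  fix d :: nat assume "d \<ge> 1"
  thus "(G_group d :: (('n \<Rightarrow> 'q alg_closure) \<Rightarrow> _) monoid)
              \<cong> semidirect_product (cyc_power d (r_num T d)) (RPerm {1..r_num T d})
                   (coord_perm_action d (r_num T d))"
    by (rule G_iso_main)
qed

end
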